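(* In the notation of the context, for $0\le i\le D-1$ the following identities of Laurent polynomials in $\eta$ hold: $$\eta\,\ell_i^-=(\tau q^D+\tau^{-1})(q^{i-D}-1)\ell^+_{i-1}+(\tau q^D+\tau^{-1})q^{i-D}\ell^-_i+\tau(q^D-q^{i+1}+1)\ell^+_i+\tau(1-q^{i+1})\ell^-_{i+1},$$ $$\eta^{-1}\ell_i^-=\tau^{-1}(1-q^{i-D})\ell^-_{i-1}+(\tau q^D+\tau^{-1})(1-q^{i-D})\ell^+_{i-1}-\tau(q^D-q^i+1)\ell^+_i,$$ $$\eta\,\ell_i^+=\tau^{-1}(1-q^{i-D})\ell^+_{i-1}-\tau^{-1}q^{i-D}\ell^-_i,$$ $$\eta^{-1}\ell_i^+=\tau^{-1}q^{i-D+1}\ell^-_i+(\tau q^D+\tau^{-1})q^{i-D+1}\ell^+_i+\tau(1-q^{i+1})\ell^+_{i+1}.$$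
   Context: Let $q$ be a prime power, $D\ge3$ an integer, and $e\in\{0,\tfrac12,1,\tfrac32,2\}$ (with $q$ a square when $e\in\{\tfrac12,\tfrac32\}$). Let $\tau=\sqrt{-1}\,q^{-(D+e)/2}$. Write $(r;q)_n=(1-r)(1-rq)\cdots(1-rq^{n-1})$ and ${}_3\phi_2\!\left(\begin{smallmatrix}r_1,r_2,r_3\\ s_1,s_2\end{smallmatrix};q,z\right)=\sum_{n\ge0}\frac{(r_1;q)_n(r_2;q)_n(r_3;q)_n}{(s_1;q)_n(s_2;q)_n}\frac{z^n}{(q;q)_n}$. For a nonzero scalar $t$ and integers $0\le i\le d$ define the Laurent polynomial $h_i(\eta;t,d;q)=\frac{(q^{-d};q)_i}{t^i}\,{}_3\phi_2\!\left(\begin{smallmatrix}q^{-i},\,t\eta^{-1},\,t\eta\\ 0,\,q^{-d}\end{smallmatrix};q,q\right)$. Let $h_i=h_i(\eta;\tau,D;q)$ ($0\le i\le D$), $h_i^\perp=h_i(\eta;\tau q,D-2;q)$ ($0\le i\le D-2$), $h^\perp_{-1}=0$, $h^\perp_{D-1}=\eta^{1-D}\prod_{n=1}^{D-1}(\eta-\tau q^n)(\eta-\tau^{-1}q^{-n})$, and $p^\perp=\eta^{-1}(\eta-\tau)(\eta-\tau^{-1}q^{-D})$. For $0\le i\le D-1$ define $\ell_i^+=\frac{h_{i+1}-p^\perp h_i^\perp}{\tau^{i+1}(1-q^D)(q;q)_i}$ and $\ell_i^-=\frac{q^D-q^i}{\tau^i(q^D-1)(q;q)_i}\Big(h_i-\frac{1-q^i}{q^D-q^i}p^\perp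 h^\perp_{i-1}\Big)$ (the non-symmetric dual $q$-Krawtchouk polynomials). Also set $\ell^\pm_{-1}=0$, $\ell_D^+=-\frac{\eta^{-1}p^\perp h^\perp_{D-1}}{\tau^{D+1}(q;q)_D}$, $\ell_D^-=\frac{p^\perp h^\perp_{D-1}}{\tau^D(q;q)_D}$. *)

theory Defs
  imports Complex_Main "HOL-Computational_Algebra.Primes"
begin

definition qpoch :: "complex \<Rightarrow> complex \<Rightarrow> nat \<Rightarrow> complex" where
  "qpoch r q n = (\<Prod>k<n. 1 - r * q ^ k)"

text \<open>Terminating basic hypergeometric series 3phi2 with r1 = q^(-i):
  all terms with index n > i vanish since (q^(-i);q)_n = 0, so the series is the finite sum below.\<close>
definition phi32_term :: "nat \<Rightarrow> complex \<Rightarrow> complex \<Rightarrow> complex \<Rightarrow> complex \<Rightarrow> complex \<Rightarrow> complex \<Rightarrow> complex" where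
  "phi32_term i r2 r3 s1 s2 q z =
     (\<Sum>n\<le>i. qpoch (inverse (q ^ i)) q n * qpoch r2 q n * qpoch r3 q n
              / (qpoch s1 q n * qpoch s2 q n) * z ^ n / qpoch q q n)"

definition hpoly :: "complex \<Rightarrow> complex \<Rightarrow> nat \<Rightarrow> complex \<Rightarrow> nat \<Rightarrow> complex" where
  "hpoly q t d \<eta> i =
     qpoch (inverse (q ^ d)) q i / t ^ i *
     phi32_term i (t / \<eta>) (t * \<eta>) 0 (inverse (q ^ d)) q q"

definition hD :: "complex \<Rightarrow> nat \<Rightarrow> complex \<Rightarrow> complex \<Rightarrow> nat \<Rightarrow> complex" where
  "hD q D \<tau> \<eta> i = hpoly q \<tau> D \<eta> i"

definition hperp :: "complex \<Rightarrow> nat \<Rightarrow> complex \<Rightarrow> complex \<Rightarrow> int \<Rightarrow> complex" where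
  "hperp q D \<tau> \<eta> i =
     (if i = -1 then 0
      else if 0 \<le> i \<and> i \<le> int D - 2 then hpoly q (\<tau> * q) (D - 2) \<eta> (nat i)
      else if i = int D - 1 then
        \<eta> powi (1 - int D) * (\<Prod>n\<in>{1..D-1}. (\<eta> - \<tau> * q ^ n) * (\<eta> - inverse \<tau> * inverse (q ^ n)))
      else 0)"

definition pperp :: "complex \<Rightarrow> nat \<Rightarrow> complex \<Rightarrow> complex \<Rightarrow> complex" where
  "pperp q D \<tau> \<eta> = inverse \<eta> * (\<eta> - \<tau>) * (\<eta> - inverse \<tau> * inverse (q ^ D))"

definition ellp :: "complex \<Rightarrow> nat \<Rightarrow> complex \<Rightarrow> complex \<Rightarrow> int \<Rightarrow> complex" where
  "ellp q D \<tau> \<eta> i =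
     (if i = -1 then 0
      else if 0 \<le> i \<and> i \<le> int D - 1 then
        (hD q D \<tau> \<eta> (nat i + 1) - pperp q D \<tau> \<eta> * hperp q D \<tau> \<eta> i)
          / (\<tau> ^ (nat i + 1) * (1 - q ^ D) * qpoch q q (nat i))
      else if i = int D then
        - (inverse \<eta> * pperp q D \<tau> \<eta> * hperp q D \<tau> \<eta> (int D - 1))
          / (\<tau> ^ (D + 1) * qpoch q q D)
      else 0)"

definition ellm :: "complex \<Rightarrow> nat \<Rightarrow> complex \<Rightarrow> complex \<Rightarrow> int \<Rightarrow> complex" where
  "ellm q D \<tau> \<eta> i =
     (if i = -1 then 0
      else if 0 \<le> i \<and> i \<le> int D - 1 then
        (q ^ D - q ^ nat i) / (\<tau> ^ nat i * (q ^ D - 1) * qpoch q q (nat i)) *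
        (hD q D \<tau> \<eta> (nat i)
          - (1 - q ^ nat i) / (q ^ D - q ^ nat i) * pperp q D \<tau> \<eta> * hperp q D \<tau> \<eta> (i - 1))
      else if i = int D then
        pperp q D \<tau> \<eta> * hperp q D \<tau> \<eta> (int D - 1) / (\<tau> ^ D * qpoch q q D)
      else 0)"

end

theory Submission
  imports Defs
begin


lemma qpoch_Suc: "qpoch r q (Suc n) = qpoch r q n * (1 - r * q ^ n)"
  by (simp add: qpoch_def)

lemma qpoch_0[simp]: "qpoch r q 0 = 1" by (simp add: qpoch_def)

lemma qpoch_Suc_shift: "qpoch r q (Suc n) = (1 - r) * qpoch (r * q) q n"
  unfolding qpoch_def prod.lessThan_Suc_shift by (simp add: mult.assoc)

lemma qpoch_add: "qpoch r q (m + n) = qpoch r q m * qpoch (r * q ^ m) q n"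
  by (induction n) (simp_all add: qpoch_Suc power_add mult_ac)

lemma qpoch_zero_param[simp]: "qpoch 0 q n = 1" by (simp add: qpoch_def)

definition pq :: "complex \<Rightarrow> nat \<Rightarrow> nat \<Rightarrow> nat \<Rightarrow> complex" where
  "pq q a b k = qpoch (q ^ a / q ^ b) q k"

lemma pq_0[simp]: "pq q a b 0 = 1" by (simp add: pq_def)

lemma pq_Suc: "pq q a b (Suc k) = pq q a b k * (1 - q ^ (a + k) / q ^ b)"
  by (simp add: pq_def qpoch_Suc power_add)

lemma pq_shift: "pq q a b (Suc k) = (1 - q ^ a / q ^ b) * pq q (Suc a) b k"
  by (simp add: pq_def qpoch_Suc_shift mult.commute)

lemma pq_add: "pq q a b (m + n) = pq q a b m * pq q (a + m) b n"
  by (simp add: pq_def qpoch_add power_add)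

lemma pq_SucSuc: "q \<noteq> 0 \<Longrightarrow> pq q (Suc a) (Suc b) k = pq q a b k"
  by (simp add: pq_def)

lemma pq_zero: "q \<noteq> 0 \<Longrightarrow> a \<le> b \<Longrightarrow> b < a + k \<Longrightarrow> pq q a b k = 0"
  unfolding pq_def qpoch_def
  apply (rule prod_zero)
  apply simp
  apply (rule bexI[of _ "b - a"])
   apply (simp add: power_add[symmetric])
  apply simp
  done

lemma pq_nonzero:
  assumes q: "q \<noteq> 0" and qinj: "\<And>a b::nat. q ^ a = q ^ b \<Longrightarrow> a = b"
    and h: "\<And>j. j < k \<Longrightarrow> a + j \<noteq> b"
  shows "pq q a b k \<noteq> 0"
  unfolding pq_def qpoch_def
proof (subst prod_zero_iff, simp, safe)
  fix j assume j: "j < k" and e: "1 - q ^ a / q ^ b * q ^ j = 0"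
  hence "q ^ (a + j) = q ^ b" using q by (simp add: power_add field_simps)
  hence "a + j = b" by (rule qinj)
  with h j show False by blast
qed

lemma qpoch_inv_pq: "qpoch (inverse (q ^ d)) q k = pq q 0 d k"
  by (simp add: pq_def divide_inverse)
lemma qpoch_q_pq: "qpoch q q k = pq q 1 0 k"
  by (simp add: pq_def)

definition uu :: "complex \<Rightarrow> complex \<Rightarrow> complex \<Rightarrow> nat \<Rightarrow> complex" where
  "uu q t \<eta> n = qpoch (t / \<eta>) q n * qpoch (t * \<eta>) q n"

definition cA :: "complex \<Rightarrow> complex \<Rightarrow> nat \<Rightarrow> nat \<Rightarrow> nat \<Rightarrow> complex" where
  "cA q t d i n = inverse (t ^ i) * pq q n d (i - n) * pq q 0 i n * q ^ n / pq q 1 0 n"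

lemma hpoly_expand:
  assumes q: "q \<noteq> 0" and qinj: "\<And>a b::nat. q ^ a = q ^ b \<Longrightarrow> a = b" and id: "i \<le> d"
  shows "hpoly q t d \<eta> i = (\<Sum>n\<le>i. cA q t d i n * uu q t \<eta> n)"
  unfolding hpoly_def phi32_term_def sum_distrib_left
proof (rule sum.cong[OF refl])
  fix n assume n: "n \<in> {..i}"
  hence ni: "n \<le> i" by simp
  have split: "pq q 0 d i = pq q 0 d n * pq q n d (i - n)"
    using pq_add[of q 0 d n "i - n"] ni by simp
  have nz: "pq q 0 d n \<noteq> 0"
    by (rule pq_nonzero[OF q qinj]) (use ni id in auto)
  show "qpoch (inverse (q ^ d)) q i / t ^ i *
        (qpoch (inverse (q ^ i)) q n * qpoch (t / \<eta>) q n * qpoch (t * \<eta>) q n /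
         (qpoch 0 q n * qpoch (inverse (q ^ d)) q n) * q ^ n / qpoch q q n) =
        cA q t d i n * uu q t \<eta> n"
    unfolding qpoch_inv_pq qpoch_q_pq cA_def uu_def split qpoch_zero_param
    using nz by (simp add: field_simps)
qed

definition cB :: "complex \<Rightarrow> complex \<Rightarrow> nat \<Rightarrow> nat \<Rightarrow> nat \<Rightarrow> complex" where
  "cB q \<tau> D j n = inverse ((\<tau> * q) ^ j) * pq q (n + 2) D (j - n) * pq q 0 j n * q ^ n / pq q 1 0 n"

lemma cA_zero: "q \<noteq> 0 \<Longrightarrow> i < n \<Longrightarrow> cA q t d i n = 0"
  unfolding cA_def using pq_zero[of q 0 i n] by simp

lemma cB_zero: "q \<noteq> 0 \<Longrightarrow> j < n \<Longrightarrow> cB q \<tau> D j n = 0"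
  unfolding cB_def using pq_zero[of q 0 j n] by simp

lemma sum_extend:
  fixes i N :: nat
  assumes "\<And>n. i < n \<Longrightarrow> f n = 0" and "i \<le> N"
  shows "(\<Sum>n\<le>i. f n) = (\<Sum>n\<le>N. (f n :: complex))"
  by (rule sum.mono_neutral_left) (use assms in \<open>auto simp: not_le\<close>)

lemma hD_expand:
  assumes q: "q \<noteq> 0" and qinj: "\<And>a b::nat. q ^ a = q ^ b \<Longrightarrow> a = b" and "i \<le> D" and "i \<le> N"
  shows "hD q D \<tau> \<eta> i = (\<Sum>n\<le>N. cA q \<tau> D i n * uu q \<tau> \<eta> n)"
proof -
  have "hD q D \<tau> \<eta> i = (\<Sum>n\<le>i. cA q \<tau> D i n * uu q \<tau> \<eta> n)"
    unfolding hD_def by (rule hpoly_expand[OF q qinj assms(3)])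
  also have "\<dots> = (\<Sum>n\<le>N. cA q \<tau> D i n * uu q \<tau> \<eta> n)"
    by (rule sum_extend) (use assms cA_zero in auto)
  finally show ?thesis .
qed

lemma pq_Dm2: "q \<noteq> 0 \<Longrightarrow> 2 \<le> D \<Longrightarrow> pq q n (D - 2) k = pq q (n + 2) D k"
proof -
  assume q: "q \<noteq> 0" and D: "2 \<le> D"
  have "pq q (n + 2) D k = pq q (Suc (Suc n)) (Suc (Suc (D - 2))) k" using D
    by (simp add: numeral_2_eq_2 Suc_diff_Suc)
  also have "\<dots> = pq q n (D - 2) k" using q by (simp add: pq_SucSuc)
  finally show ?thesis by simp
qed

lemma hperp_expand_low:
  assumes q: "q \<noteq> 0" and qinj: "\<And>a b::nat. q ^ a = q ^ b \<Longrightarrow> a = b" and D: "3 \<le> D" and j: "j \<le> D - 2"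
  shows "hperp q D \<tau> \<eta> (int j) = (\<Sum>n\<le>j. cB q \<tau> D j n * uu q (\<tau> * q) \<eta> n)"
proof -
  have "hperp q D \<tau> \<eta> (int j) = hpoly q (\<tau> * q) (D - 2) \<eta> j"
    unfolding hperp_def using D j by auto
  also have "\<dots> = (\<Sum>n\<le>j. cA q (\<tau> * q) (D - 2) j n * uu q (\<tau> * q) \<eta> n)"
    by (rule hpoly_expand[OF q qinj j])
  also have "\<dots> = (\<Sum>n\<le>j. cB q \<tau> D j n * uu q (\<tau> * q) \<eta> n)"
    unfolding cA_def cB_def using pq_Dm2[OF q] D by simp
  finally show ?thesis .
qed

lemma prodform:
  assumes q: "q \<noteq> 0" and qinj: "\<And>a b::nat. q ^ a = q ^ b \<Longrightarrow> a = b" and t: "\<tau> \<noteq> 0" and e: "\<eta> \<noteq> 0"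
  shows "inverse (\<eta> ^ N) * (\<Prod>n\<in>{1..N}. (\<eta> - \<tau> * q ^ n) * (\<eta> - inverse \<tau> * inverse (q ^ n)))
     = inverse ((\<tau> * q) ^ N) * pq q 0 N N * q ^ N / pq q 1 0 N * uu q (\<tau> * q) \<eta> N"
proof (induction N)
  case 0
  then show ?case by (simp add: uu_def)
next
  case (Suc N)
  have nz: "pq q 1 0 N \<noteq> 0" by (rule pq_nonzero[OF q qinj]) auto
  have nz1: "1 - q ^ Suc N \<noteq> 0"
  proof
    assume "1 - q ^ Suc N = 0" hence "q ^ Suc N = q ^ 0" by simp
    from qinj[OF this] show False by simp
  qed
  have a: "pq q 0 (Suc N) (Suc N) = (1 - 1 / q ^ Suc N) * pq q 0 N N"
    using pq_shift[of q 0 "Suc N" N] pq_SucSuc[OF q, of 0 N N] by simp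
  have b: "pq q 1 0 (Suc N) = pq q 1 0 N * (1 - q ^ Suc N)"
    by (simp add: pq_Suc)
  have c: "uu q (\<tau> * q) \<eta> (Suc N) = uu q (\<tau> * q) \<eta> N * ((1 - \<tau> * q ^ Suc N / \<eta>) * (1 - \<tau> * q ^ Suc N * \<eta>))"
    by (simp add: uu_def qpoch_Suc mult_ac)
  have p: "(\<Prod>n\<in>{1..Suc N}. (\<eta> - \<tau> * q ^ n) * (\<eta> - inverse \<tau> * inverse (q ^ n))) =
     (\<Prod>n\<in>{1..N}. (\<eta> - \<tau> * q ^ n) * (\<eta> - inverse \<tau> * inverse (q ^ n))) *
      ((\<eta> - \<tau> * q ^ Suc N) * (\<eta> - inverse \<tau> * inverse (q ^ Suc N)))"
    by (simp add: prod.cl_ivl_Suc)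
  have "inverse (\<eta> ^ Suc N) * (\<Prod>n\<in>{1..Suc N}. (\<eta> - \<tau> * q ^ n) * (\<eta> - inverse \<tau> * inverse (q ^ n)))
    = (inverse (\<eta> ^ N) * (\<Prod>n\<in>{1..N}. (\<eta> - \<tau> * q ^ n) * (\<eta> - inverse \<tau> * inverse (q ^ n))))
      * ((\<eta> - \<tau> * q ^ Suc N) * (\<eta> - inverse \<tau> * inverse (q ^ Suc N)) / \<eta>)"
    unfolding p by (simp add: field_simps)
  also have "\<dots> = inverse ((\<tau> * q) ^ N) * pq q 0 N N * q ^ N / pq q 1 0 N * uu q (\<tau> * q) \<eta> N
      * ((\<eta> - \<tau> * q ^ Suc N) * (\<eta> - inverse \<tau> * inverse (q ^ Suc N)) / \<eta>)"
    unfolding Suc.IH ..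
  also have "\<dots> = inverse ((\<tau> * q) ^ Suc N) * pq q 0 (Suc N) (Suc N) * q ^ Suc N / pq q 1 0 (Suc N) * uu q (\<tau> * q) \<eta> (Suc N)"
    unfolding a b c using nz nz1 q t e
    by (simp add: field_simps)
  finally show ?case .
qed


lemma sum_single:
  fixes g :: "nat \<Rightarrow> complex"
  assumes "k \<le> N" and "\<And>n. n \<noteq> k \<Longrightarrow> g n = 0"
  shows "(\<Sum>n\<le>N. g n) = g k"
proof -
  have "(\<Sum>n\<le>N. g n) = g k + (\<Sum>n\<in>{..N} - {k}. g n)"
    by (rule sum.remove) (use assms in auto)
  also have "(\<Sum>n\<in>{..N} - {k}. g n) = 0" using assms(2) by (intro sum.neutral) auto
  finally show ?thesis by simp
qed

lemma hperp_expand: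
  assumes q: "q \<noteq> 0" and qinj: "\<And>a b::nat. q ^ a = q ^ b \<Longrightarrow> a = b" and D: "3 \<le> D"
    and t: "\<tau> \<noteq> 0" and e: "\<eta> \<noteq> 0" and j: "j \<le> D - 1" and jN: "j \<le> N"
  shows "hperp q D \<tau> \<eta> (int j) = (\<Sum>n\<le>N. cB q \<tau> D j n * uu q (\<tau> * q) \<eta> n)"
proof (cases "j \<le> D - 2")
  case True
  have "hperp q D \<tau> \<eta> (int j) = (\<Sum>n\<le>j. cB q \<tau> D j n * uu q (\<tau> * q) \<eta> n)"
    by (rule hperp_expand_low[OF q qinj D True])
  also have "\<dots> = (\<Sum>n\<le>N. cB q \<tau> D j n * uu q (\<tau> * q) \<eta> n)"
    by (rule sum_extend) (use jN cB_zero[OF q] in auto)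
  finally show ?thesis .
next
  case False
  hence jD: "j = D - 1" using j by simp
  have "hperp q D \<tau> \<eta> (int j) = \<eta> powi (1 - int D) *
        (\<Prod>n\<in>{1..D-1}. (\<eta> - \<tau> * q ^ n) * (\<eta> - inverse \<tau> * inverse (q ^ n)))"
    unfolding hperp_def jD using D by auto
  also have "\<eta> powi (1 - int D) = inverse (\<eta> ^ (D - 1))"
  proof -
    have "1 - int D = - int (D - 1)" using D by simp
    hence "\<eta> powi (1 - int D) = \<eta> powi (- int (D - 1))" by (simp only:)
    thus ?thesis by (simp only: power_int_minus power_int_of_nat)
  qed
  also have "inverse (\<eta> ^ (D - 1)) * (\<Prod>n\<in>{1..D-1}. (\<eta> - \<tau> * q ^ n) * (\<eta> - inverse \<tau> * inverse (q ^ n)))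
     = cB q \<tau> D (D - 1) (D - 1) * uu q (\<tau> * q) \<eta> (D - 1)"
    using prodform[OF q qinj t e, of "D - 1"] by (simp add: cB_def)
  also have "\<dots> = (\<Sum>n\<le>N. cB q \<tau> D (D - 1) n * uu q (\<tau> * q) \<eta> n)"
  proof (rule sum_single[symmetric, of "D - 1" N "\<lambda>n. cB q \<tau> D (D - 1) n * uu q (\<tau> * q) \<eta> n"])
    show "D - 1 \<le> N" using jN jD by simp
  next
    fix n assume n: "n \<noteq> D - 1"
    show "cB q \<tau> D (D - 1) n * uu q (\<tau> * q) \<eta> n = 0"
    proof (cases "n < D - 1")
      case True
      have "pq q (n + 2) D (D - 1 - n) = 0" by (rule pq_zero[OF q]) (use True in auto)
      thus ?thesis unfolding cB_def by simp
    next
      case False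
      thus ?thesis using n cB_zero[OF q, of "D - 1" n] by simp
    qed
  qed
  finally show ?thesis unfolding jD .
qed

lemma uu_shift:
  assumes e: "\<eta> \<noteq> 0"
  shows "uu q \<tau> \<eta> (Suc n) = (1 - \<tau> * (\<eta> + inverse \<eta>) + \<tau>\<^sup>2) * uu q (\<tau> * q) \<eta> n"
proof -
  have a: "\<tau> / \<eta> * q = \<tau> * q / \<eta>" "\<tau> * \<eta> * q = \<tau> * q * \<eta>" by (simp_all add: mult_ac)
  show ?thesis unfolding uu_def qpoch_Suc_shift a using e
    by (simp add: field_simps power2_eq_square)
qed

lemma uu_Suc: "uu q t \<eta> (Suc n) = uu q t \<eta> n * ((1 - t * q ^ n / \<eta>) * (1 - t * q ^ n * \<eta>))"
  by (simp add: uu_def qpoch_Suc mult_ac)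

lemma uu_conv_pt:
  assumes e: "\<eta> \<noteq> 0" and q: "q \<noteq> 0"
  shows "uu q \<tau> \<eta> n = uu q (\<tau> * q) \<eta> n / q ^ n
      + (1 - 1 / q ^ n) * (1 - \<tau>\<^sup>2 * q ^ n) * uu q (\<tau> * q) \<eta> (n - 1)"
proof (cases n)
  case 0 then show ?thesis by (simp add: uu_def)
next
  case (Suc k)
  have s1: "uu q \<tau> \<eta> (Suc k) = (1 - \<tau> * (\<eta> + inverse \<eta>) + \<tau>\<^sup>2) * uu q (\<tau> * q) \<eta> k"
    by (rule uu_shift[OF e])
  show ?thesis unfolding Suc s1 uu_Suc[of q "\<tau> * q" \<eta> k] using e q
    by (simp add: field_simps power2_eq_square)
qed

lemma uu_x:
  assumes e: "\<eta> \<noteq> 0" and q: "q \<noteq> 0" and t: "\<tau> \<noteq> 0"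
  shows "(\<eta> + inverse \<eta>) * uu q (\<tau> * q) \<eta> n =
     ((1 + \<tau>\<^sup>2 * q ^ (2 * n + 2)) * uu q (\<tau> * q) \<eta> n - uu q (\<tau> * q) \<eta> (Suc n)) / (\<tau> * q ^ Suc n)"
  unfolding uu_Suc[of q "\<tau> * q" \<eta> n] using e q t
  by (simp add: field_simps power2_eq_square power_add power_mult)

lemma sum_shift0:
  fixes g :: "nat \<Rightarrow> complex"
  assumes "g 0 = 0" "g (Suc N) = 0"
  shows "(\<Sum>n\<le>N. g n) = (\<Sum>n\<le>N. g (Suc n))"
proof -
  have "(\<Sum>n\<le>Suc N. g n) = g 0 + (\<Sum>n\<le>N. g (Suc n))" by (rule sum.atMost_Suc_shift)
  moreover have "(\<Sum>n\<le>Suc N. g n) = (\<Sum>n\<le>N. g n) + g (Suc N)" by simp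
  ultimately show ?thesis using assms by simp
qed

lemma conv_sum:
  assumes e: "\<eta> \<noteq> 0" and q: "q \<noteq> 0" and aN: "a (Suc N) = 0"
  shows "(\<Sum>n\<le>N. a n * uu q \<tau> \<eta> n) =
    (\<Sum>m\<le>N. (a m / q ^ m + a (Suc m) * (1 - 1 / q ^ Suc m) * (1 - \<tau>\<^sup>2 * q ^ Suc m)) * uu q (\<tau> * q) \<eta> m)"
proof -
  define g where "g n = a n * ((1 - 1 / q ^ n) * (1 - \<tau>\<^sup>2 * q ^ n) * uu q (\<tau> * q) \<eta> (n - 1))" for n
  have "(\<Sum>n\<le>N. a n * uu q \<tau> \<eta> n) = (\<Sum>n\<le>N. a n * (uu q (\<tau> * q) \<eta> n / q ^ n) + g n)"
  proof (rule sum.cong[OF refl])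
    fix n show "a n * uu q \<tau> \<eta> n = a n * (uu q (\<tau> * q) \<eta> n / q ^ n) + g n"
      unfolding g_def uu_conv_pt[OF e q, of \<tau> n] by (simp only: distrib_left)
  qed
  also have "\<dots> = (\<Sum>n\<le>N. a n * (uu q (\<tau> * q) \<eta> n / q ^ n)) + (\<Sum>n\<le>N. g n)"
    by (rule sum.distrib)
  also have "(\<Sum>n\<le>N. g n) = (\<Sum>n\<le>N. g (Suc n))"
    by (rule sum_shift0) (simp_all add: g_def aN)
  also have "(\<Sum>n\<le>N. a n * (uu q (\<tau> * q) \<eta> n / q ^ n)) + (\<Sum>n\<le>N. g (Suc n))
      = (\<Sum>n\<le>N. a n * (uu q (\<tau> * q) \<eta> n / q ^ n) + g (Suc n))"
    by (rule sum.distrib[symmetric])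
  also have "\<dots> = (\<Sum>m\<le>N. (a m / q ^ m + a (Suc m) * (1 - 1 / q ^ Suc m) * (1 - \<tau>\<^sup>2 * q ^ Suc m)) * uu q (\<tau> * q) \<eta> m)"
  proof (rule sum.cong[OF refl])
    fix m show "a m * (uu q (\<tau> * q) \<eta> m / q ^ m) + g (Suc m) =
      (a m / q ^ m + a (Suc m) * (1 - 1 / q ^ Suc m) * (1 - \<tau>\<^sup>2 * q ^ Suc m)) * uu q (\<tau> * q) \<eta> m"
      unfolding g_def by (simp add: algebra_simps)
  qed
  finally show ?thesis .
qed

definition shiftB :: "(nat \<Rightarrow> complex) \<Rightarrow> nat \<Rightarrow> complex" where
  "shiftB b m = (case m of 0 \<Rightarrow> 0 | Suc k \<Rightarrow> b k)"

lemma xmul_sum: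
  assumes e: "\<eta> \<noteq> 0" and q: "q \<noteq> 0" and t: "\<tau> \<noteq> 0" and bN: "b N = 0"
  shows "(\<eta> + inverse \<eta>) * (\<Sum>n\<le>N. b n * uu q (\<tau> * q) \<eta> n) =
    (\<Sum>m\<le>N. (b m * (1 + \<tau>\<^sup>2 * q ^ (2 * m + 2)) / (\<tau> * q ^ Suc m) - shiftB b m / (\<tau> * q ^ m)) * uu q (\<tau> * q) \<eta> m)"
proof -
  define g where "g m = shiftB b m / (\<tau> * q ^ m) * uu q (\<tau> * q) \<eta> m" for m
  define f where "f m = b m * (1 + \<tau>\<^sup>2 * q ^ (2 * m + 2)) / (\<tau> * q ^ Suc m) * uu q (\<tau> * q) \<eta> m" for m
  have "(\<eta> + inverse \<eta>) * (\<Sum>n\<le>N. b n * uu q (\<tau> * q) \<eta> n) = (\<Sum>n\<le>N. f n - g (Suc n))"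
    unfolding sum_distrib_left
  proof (rule sum.cong[OF refl])
    fix n show "(\<eta> + inverse \<eta>) * (b n * uu q (\<tau> * q) \<eta> n) = f n - g (Suc n)"
    proof -
      have "(\<eta> + inverse \<eta>) * (b n * uu q (\<tau> * q) \<eta> n) = b n * ((\<eta> + inverse \<eta>) * uu q (\<tau> * q) \<eta> n)"
        by (simp only: mult_ac)
      also have "\<dots> = f n - g (Suc n)"
        unfolding uu_x[OF e q t, of n] f_def g_def shiftB_def nat.case using q t
        by (simp add: field_simps)
      finally show ?thesis .
    qed
  qed
  also have "\<dots> = (\<Sum>n\<le>N. f n) - (\<Sum>n\<le>N. g (Suc n))" by (rule sum_subtractf)
  also have "(\<Sum>n\<le>N. g (Suc n)) = (\<Sum>n\<le>N. g n)"
    by (rule sum_shift0[symmetric]) (simp_all add: g_def shiftB_def bN)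
  also have "(\<Sum>n\<le>N. f n) - (\<Sum>n\<le>N. g n) = (\<Sum>n\<le>N. f n - g n)" by (rule sum_subtractf[symmetric])
  also have "\<dots> = (\<Sum>m\<le>N. (b m * (1 + \<tau>\<^sup>2 * q ^ (2 * m + 2)) / (\<tau> * q ^ Suc m) - shiftB b m / (\<tau> * q ^ m)) * uu q (\<tau> * q) \<eta> m)"
    unfolding f_def g_def by (simp add: algebra_simps)
  finally show ?thesis .
qed



lemma B1_red:
  fixes q \<tau> M P E X Y F T :: complex
  assumes nz: "q \<noteq> 0" "\<tau> \<noteq> 0" "M \<noteq> 0" "P \<noteq> 0" "E \<noteq> 0" "F \<noteq> 0" "T \<noteq> 0"
  shows "(1 - q * P / E) * ((inverse (\<tau> * T) * (1 - M / E) * (1 - q * M / E) * X * (1 - 1 / (q * P)) * Y * M / F) / M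
      + (- inverse (\<tau> * T) * (1 - q * M / E) * X * (1 - 1 / (q * P)) * Y * (1 - M / (q * P)) / F) * (1 - \<tau>\<^sup>2 * (q * M)))
    = (1 - 1 / E) * (inverse (\<tau> * q * T * P) * (1 - q * P / E) * X * (1 - q * q * P / E) * (1 - 1 / (q * P)) * Y * M / F)
      + (1 - q * P) / E * ((inverse (T * P) * (1 - q * P / E) * X * (1 - M / (q * P)) * Y * M / F) * (1 + \<tau>\<^sup>2 * (q * M)\<^sup>2) / (\<tau> * (q * M))
          - (inverse (T * P) * (1 - q * M / E) * (1 - q * P / E) * X * Y * (M / q) * (1 - M) / F) / (\<tau> * M))
      - (1 - q * P) * (\<tau> + inverse \<tau> / E) * (inverse (T * P) * (1 - q * P / E) * X * (1 - M / (q * P)) * Y * M / F)"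
  using nz by (simp add: field_simps power2_eq_square)

lemma qpow_ne:
  fixes q :: complex
  assumes qinj: "\<And>a b::nat. q ^ a = q ^ b \<Longrightarrow> a = b" and q: "q \<noteq> 0" and "a \<noteq> b"
  shows "1 - q ^ a / q ^ b \<noteq> 0"
proof
  assume "1 - q ^ a / q ^ b = 0"
  hence "q ^ a = q ^ b" using q by (simp add: field_simps)
  with qinj assms(3) show False by blast
qed

lemma qpow_ne1:
  fixes q :: complex
  assumes qinj: "\<And>a b::nat. q ^ a = q ^ b \<Longrightarrow> a = b" and "a \<noteq> 0"
  shows "1 - q ^ a \<noteq> 0"
proof
  assume "1 - q ^ a = 0"
  hence "q ^ a = q ^ 0" by (simp add: right_minus_eq)
  with qinj assms(2) show False by blast
qed

lemma B1_coef_gen: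
  assumes q: "q \<noteq> 0" and qinj: "\<And>a b::nat. q ^ a = q ^ b \<Longrightarrow> a = b" and t: "\<tau> \<noteq> 0"
    and iD: "Suc (m + r) < D"
  shows "(1 - q ^ Suc (m + r) / q ^ D) * (cA q \<tau> D (Suc (m + r)) m / q ^ m
        + cA q \<tau> D (Suc (m + r)) (Suc m) * (1 - 1 / q ^ Suc m) * (1 - \<tau>\<^sup>2 * q ^ Suc m))
    = (1 - 1 / q ^ D) * cB q \<tau> D (Suc (m + r)) m
      + (1 - q ^ Suc (m + r)) / q ^ D * (cB q \<tau> D (m + r) m * (1 + \<tau>\<^sup>2 * q ^ (2 * m + 2)) / (\<tau> * q ^ Suc m)
          - shiftB (cB q \<tau> D (m + r)) m / (\<tau> * q ^ m))
      - (1 - q ^ Suc (m + r)) * (\<tau> + inverse \<tau> / q ^ D) * cB q \<tau> D (m + r) m"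
proof -
  define E where "E = q ^ D"
  define M where "M = q ^ m"
  define P where "P = q ^ m * q ^ r"
  define T where "T = \<tau> ^ m * \<tau> ^ r"
  define F where "F = pq q 1 0 m"
  have E0: "E \<noteq> 0" and M0: "M \<noteq> 0" and P0: "P \<noteq> 0" and T0: "T \<noteq> 0"
    using q t by (simp_all add: E_def M_def P_def T_def)
  have F0: "F \<noteq> 0" unfolding F_def by (rule pq_nonzero[OF q qinj]) auto
  have nX: "1 - q * M / E \<noteq> 0"
    using qpow_ne[OF qinj q, of "Suc m" D] iD by (simp add: M_def E_def)
  have nY: "1 - 1 / (q * P) \<noteq> 0"
    using qpow_ne[OF qinj q, of 0 "Suc (m + r)"] by (simp add: P_def power_add)
  have nF: "1 - q * M \<noteq> 0"
    using qpow_ne1[OF qinj, where a = "Suc m"] by (simp add: M_def)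
  define X where "X = pq q (Suc m) D r / (1 - q * M / E)"
  define Y where "Y = pq q 0 (Suc (m + r)) m / (1 - 1 / (q * P))"
  have R1: "pq q (Suc m) D r = (1 - q * M / E) * X" unfolding X_def using nX by simp
  have R3: "pq q 0 (Suc (m + r)) m = (1 - 1 / (q * P)) * Y" unfolding Y_def using nY by simp
  have R2: "pq q (m + 2) D r = (1 - q * P / E) * X"
  proof -
    have "pq q (Suc m) D (Suc r) = pq q (Suc m) D r * (1 - q * P / E)"
      by (simp add: pq_Suc P_def E_def power_add)
    moreover have "pq q (Suc m) D (Suc r) = (1 - q * M / E) * pq q (m + 2) D r"
      by (simp add: pq_shift M_def E_def)
    ultimately have "(1 - q * M / E) * pq q (m + 2) D r = (1 - q * M / E) * ((1 - q * P / E) * X)"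
      unfolding R1 by (simp add: mult_ac)
    thus ?thesis using nX E0 by (simp add: numeral_2_eq_2)
  qed
  have R4: "pq q 0 (m + r) m = (1 - M / (q * P)) * Y"
  proof -
    have "pq q 0 (Suc (m + r)) (Suc m) = pq q 0 (Suc (m + r)) m * (1 - M / (q * P))"
      by (simp add: pq_Suc P_def M_def power_add)
    moreover have "pq q 0 (Suc (m + r)) (Suc m) = (1 - 1 / (q * P)) * pq q 0 (m + r) m"
      using pq_shift[of q 0 "Suc (m + r)" m] pq_SucSuc[OF q, of 0 "m + r" m] by (simp add: P_def power_add)
    ultimately have "(1 - 1 / (q * P)) * pq q 0 (m + r) m = (1 - 1 / (q * P)) * ((1 - M / (q * P)) * Y)"
      unfolding R3 by (simp add: mult_ac)
    thus ?thesis using nY q P0 by auto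
  qed
  have hA0: "cA q \<tau> D (Suc (m + r)) m = inverse (\<tau> * T) * (1 - M / E) * (1 - q * M / E) * X * (1 - 1 / (q * P)) * Y * M / F"
  proof -
    have "pq q m D (Suc (m + r) - m) = (1 - M / E) * pq q (Suc m) D r"
      using pq_shift[of q m D r] by (simp add: Suc_diff_le M_def E_def)
    thus ?thesis unfolding cA_def R1 R3 F_def[symmetric]
      by (simp add: T_def M_def power_add mult_ac)
  qed
  have hA1: "cA q \<tau> D (Suc (m + r)) (Suc m) * (1 - 1 / q ^ Suc m) =
      - inverse (\<tau> * T) * (1 - q * M / E) * X * (1 - 1 / (q * P)) * Y * (1 - M / (q * P)) / F"
  proof -
    have a: "pq q 0 (Suc (m + r)) (Suc m) = (1 - 1 / (q * P)) * Y * (1 - M / (q * P))"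
      using R3 by (simp add: pq_Suc P_def M_def power_add)
    have b: "pq q 1 0 (Suc m) = F * (1 - q * M)" by (simp add: pq_Suc F_def M_def)
    have c: "Suc (m + r) - Suc m = r" by simp
    have d: "q ^ Suc m = q * M" "\<tau> ^ Suc (m + r) = \<tau> * T" by (simp_all add: M_def T_def power_add)
    show ?thesis unfolding cA_def a b c R1 d using F0 nF q M0 E0 P0 T0 t
      by (simp add: field_simps)
  qed
  have hB0: "cB q \<tau> D (Suc (m + r)) m = inverse (\<tau> * q * T * P) * (1 - q * P / E) * X * (1 - q * q * P / E) * (1 - 1 / (q * P)) * Y * M / F"
  proof -
    have "pq q (m + 2) D (Suc (m + r) - m) = (1 - q * P / E) * X * (1 - q * q * P / E)"
      using R2 by (simp add: Suc_diff_le pq_Suc P_def E_def power_add mult_ac)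
    thus ?thesis unfolding cB_def R3 F_def[symmetric]
      by (simp add: T_def M_def P_def power_add power_mult_distrib mult_ac)
  qed
  have hBj: "cB q \<tau> D (m + r) m = inverse (T * P) * (1 - q * P / E) * X * (1 - M / (q * P)) * Y * M / F"
    unfolding cB_def R4 F_def[symmetric] using R2
    by (simp add: T_def M_def P_def power_add power_mult_distrib mult_ac)
  have hS: "shiftB (cB q \<tau> D (m + r)) m = inverse (T * P) * (1 - q * M / E) * (1 - q * P / E) * X * Y * (M / q) * (1 - M) / F"
  proof (cases m)
    case 0 then show ?thesis by (simp add: shiftB_def M_def)
  next
    case (Suc k)
    have a: "pq q (k + 2) D (m + r - k) = (1 - q * M / E) * ((1 - q * P / E) * X)"
    proof -
      have "m + r - k = Suc r" using Suc by simp
      hence "pq q (k + 2) D (m + r - k) = (1 - q ^ (k + 2) / q ^ D) * pq q (m + 2) D r"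
        using pq_shift[of q "k + 2" D r] Suc by simp
      thus ?thesis unfolding R2 using Suc by (simp add: M_def E_def)
    qed
    have b: "pq q 0 (m + r) k = Y"
    proof -
      have "pq q 0 (Suc (m + r)) m = (1 - 1 / (q * P)) * pq q 0 (m + r) k"
        using pq_shift[of q 0 "Suc (m + r)" k] pq_SucSuc[OF q, of 0 "m + r" k] Suc
        by (simp add: P_def power_add)
      thus ?thesis unfolding R3 using nY q P0 by auto
    qed
    have nM: "1 - M \<noteq> 0" using qpow_ne1[OF qinj, where a = m] Suc by (simp add: M_def)
    have c: "pq q 1 0 k = F / (1 - M)"
    proof -
      have "F = pq q 1 0 k * (1 - M)" unfolding F_def Suc by (simp add: pq_Suc M_def Suc)
      thus ?thesis using nM by simp
    qed
    have d: "q ^ k = M / q" "(\<tau> * q) ^ (m + r) = T * P"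
      using q by (simp_all add: M_def Suc T_def P_def power_add power_mult_distrib)
    have cBk: "shiftB (cB q \<tau> D (m + r)) m = cB q \<tau> D (m + r) k" by (simp add: shiftB_def Suc)
    show ?thesis unfolding cBk cB_def a b c d using q t F0 nM E0 P0 T0 M0
      by (simp add: field_simps)
  qed
  have pw: "q ^ Suc (m + r) = q * P" "q ^ D = E" "q ^ Suc m = q * M" "q ^ m = M" "q ^ (2 * m + 2) = (q * M)\<^sup>2"
    by (simp_all add: P_def E_def M_def power_add power2_eq_square power_mult_distrib) (simp add: power_mult mult_ac power2_eq_square)
  show ?thesis
    unfolding hA1 unfolding hA0 hB0 hBj hS pw
    by (rule B1_red[OF q t M0 P0 E0 F0 T0])
qed

lemma B1_coef:
  assumes q: "q \<noteq> 0" and qinj: "\<And>a b::nat. q ^ a = q ^ b \<Longrightarrow> a = b" and t: "\<tau> \<noteq> 0"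
    and iD: "Suc j < D"
  shows "(1 - q ^ Suc j / q ^ D) * (cA q \<tau> D (Suc j) m / q ^ m
        + cA q \<tau> D (Suc j) (Suc m) * (1 - 1 / q ^ Suc m) * (1 - \<tau>\<^sup>2 * q ^ Suc m))
    = (1 - 1 / q ^ D) * cB q \<tau> D (Suc j) m
      + (1 - q ^ Suc j) / q ^ D * (cB q \<tau> D j m * (1 + \<tau>\<^sup>2 * q ^ (2 * m + 2)) / (\<tau> * q ^ Suc m)
          - shiftB (cB q \<tau> D j) m / (\<tau> * q ^ m))
      - (1 - q ^ Suc j) * (\<tau> + inverse \<tau> / q ^ D) * cB q \<tau> D j m"
proof -
  consider (gen) "m \<le> j" | (top) "m = Suc j" | (big) "Suc j < m" by linarith
  then show ?thesis
  proof cases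
    case gen
    then obtain r where r: "j = m + r" using le_Suc_ex by blast
    have mr: "Suc (m + r) < D" using iD r by simp
    show ?thesis unfolding r by (rule B1_coef_gen[OF q qinj t mr])
  next
    case big
    have z: "cA q \<tau> D (Suc j) m = 0" "cA q \<tau> D (Suc j) (Suc m) = 0" "cB q \<tau> D (Suc j) m = 0"
      "cB q \<tau> D j m = 0" "shiftB (cB q \<tau> D j) m = 0"
      using big cA_zero[OF q] cB_zero[OF q] by (auto simp: shiftB_def split: nat.split)
    show ?thesis unfolding z by simp
  next
    case top
    define E where "E = q ^ D"
    define P where "P = q ^ j"
    define T where "T = \<tau> ^ j"
    define Y where "Y = pq q 0 j j"
    define F where "F = pq q 1 0 j"
    have E0: "E \<noteq> 0" and P0: "P \<noteq> 0" and T0: "T \<noteq> 0"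
      using q t by (simp_all add: E_def P_def T_def)
    have F0: "F \<noteq> 0" unfolding F_def by (rule pq_nonzero[OF q qinj]) auto
    have nF: "1 - q * P \<noteq> 0"
      using qpow_ne1[OF qinj, where a = "Suc j"] by (simp add: P_def)
    have G: "pq q 0 (Suc j) (Suc j) = (1 - 1 / (q * P)) * Y"
      using pq_shift[of q 0 "Suc j" j] pq_SucSuc[OF q, of 0 j j] by (simp add: Y_def P_def)
    have Fs: "pq q 1 0 (Suc j) = F * (1 - q * P)" by (simp add: pq_Suc F_def P_def)
    have z: "cA q \<tau> D (Suc j) (Suc m) = 0" "cB q \<tau> D j m = 0"
      using top cA_zero[OF q] cB_zero[OF q] by auto
    have sB: "shiftB (cB q \<tau> D j) m = cB q \<tau> D j j" by (simp add: shiftB_def top)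
    have pw: "q ^ Suc j = q * P" "\<tau> ^ Suc j = \<tau> * T" "(\<tau> * q) ^ Suc j = \<tau> * q * T * P"
      "(\<tau> * q) ^ j = T * P" "q ^ D = E" "q ^ j = P"
      by (simp_all add: P_def T_def E_def power_mult_distrib)
    show ?thesis unfolding z sB unfolding top cA_def cB_def G Fs
      unfolding Y_def[symmetric] F_def[symmetric] pw using q t E0 P0 T0 F0 nF
      by (simp add: field_simps)
  qed
qed

lemma lincomb3:
  fixes f g h u :: "nat \<Rightarrow> complex"
  shows "a * (\<Sum>m\<le>N. f m * u m) + b * (\<Sum>m\<le>N. g m * u m) + c * (\<Sum>m\<le>N. h m * u m)
    = (\<Sum>m\<le>N. (a * f m + b * g m + c * h m) * u m)"
  by (simp add: sum_distrib_left sum.distrib algebra_simps)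

lemma lincomb1:
  fixes f u :: "nat \<Rightarrow> complex"
  shows "a * (\<Sum>m\<le>N. f m * u m) = (\<Sum>m\<le>N. (a * f m) * u m)"
  by (simp add: sum_distrib_left algebra_simps)

lemma B1:
  assumes q: "q \<noteq> 0" and qinj: "\<And>a b::nat. q ^ a = q ^ b \<Longrightarrow> a = b" and t: "\<tau> \<noteq> 0"
    and e: "\<eta> \<noteq> 0" and D: "3 \<le> D" and iD: "Suc j < D"
  shows "(1 - q ^ Suc j / q ^ D) * hD q D \<tau> \<eta> (Suc j) =
     (1 - 1 / q ^ D) * hperp q D \<tau> \<eta> (int (Suc j))
     + (1 - q ^ Suc j) * ((\<eta> + inverse \<eta>) / q ^ D - (\<tau> + inverse \<tau> / q ^ D)) * hperp q D \<tau> \<eta> (int j)"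
proof -
  define u where "u = uu q (\<tau> * q) \<eta>"
  define Ah where "Ah m = cA q \<tau> D (Suc j) m / q ^ m
        + cA q \<tau> D (Suc j) (Suc m) * (1 - 1 / q ^ Suc m) * (1 - \<tau>\<^sup>2 * q ^ Suc m)" for m
  define XB where "XB m = cB q \<tau> D j m * (1 + \<tau>\<^sup>2 * q ^ (2 * m + 2)) / (\<tau> * q ^ Suc m)
          - shiftB (cB q \<tau> D j) m / (\<tau> * q ^ m)" for m
  have h: "hD q D \<tau> \<eta> (Suc j) = (\<Sum>m\<le>D. Ah m * u m)"
  proof -
    have "hD q D \<tau> \<eta> (Suc j) = (\<Sum>n\<le>D. cA q \<tau> D (Suc j) n * uu q \<tau> \<eta> n)"
      by (rule hD_expand[OF q qinj]) (use iD in auto)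
    also have "\<dots> = (\<Sum>m\<le>D. Ah m * u m)" unfolding Ah_def u_def
      by (rule conv_sum[OF e q]) (rule cA_zero[OF q], use iD in simp)
    finally show ?thesis .
  qed
  have H1: "hperp q D \<tau> \<eta> (int (Suc j)) = (\<Sum>m\<le>D. cB q \<tau> D (Suc j) m * u m)"
    unfolding u_def by (rule hperp_expand[OF q qinj D t e]) (use iD in auto)
  have H0: "hperp q D \<tau> \<eta> (int j) = (\<Sum>m\<le>D. cB q \<tau> D j m * u m)"
    unfolding u_def by (rule hperp_expand[OF q qinj D t e]) (use iD in auto)
  have XH0: "(\<eta> + inverse \<eta>) * hperp q D \<tau> \<eta> (int j) = (\<Sum>m\<le>D. XB m * u m)"
    unfolding H0 XB_def u_def by (rule xmul_sum[OF e q t]) (rule cB_zero[OF q], use iD in simp)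
  have "(1 - 1 / q ^ D) * hperp q D \<tau> \<eta> (int (Suc j))
     + (1 - q ^ Suc j) * ((\<eta> + inverse \<eta>) / q ^ D - (\<tau> + inverse \<tau> / q ^ D)) * hperp q D \<tau> \<eta> (int j)
     = (1 - 1 / q ^ D) * hperp q D \<tau> \<eta> (int (Suc j))
       + ((1 - q ^ Suc j) / q ^ D) * ((\<eta> + inverse \<eta>) * hperp q D \<tau> \<eta> (int j))
       + (- (1 - q ^ Suc j) * (\<tau> + inverse \<tau> / q ^ D)) * hperp q D \<tau> \<eta> (int j)"
    using q t e by (simp add: field_simps)
  also have "\<dots> = (\<Sum>m\<le>D. ((1 - 1 / q ^ D) * cB q \<tau> D (Suc j) m + ((1 - q ^ Suc j) / q ^ D) * XB m
       + (- (1 - q ^ Suc j) * (\<tau> + inverse \<tau> / q ^ D)) * cB q \<tau> D j m) * u m)"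
    unfolding XH0 unfolding H1 H0 by (rule lincomb3)
  also have "\<dots> = (\<Sum>m\<le>D. ((1 - q ^ Suc j / q ^ D) * Ah m) * u m)"
  proof (rule sum.cong[OF refl])
    fix m
    show "((1 - 1 / q ^ D) * cB q \<tau> D (Suc j) m + ((1 - q ^ Suc j) / q ^ D) * XB m
       + (- (1 - q ^ Suc j) * (\<tau> + inverse \<tau> / q ^ D)) * cB q \<tau> D j m) * u m
       = ((1 - q ^ Suc j / q ^ D) * Ah m) * u m"
    proof -
      have c: "(1 - q ^ Suc j / q ^ D) * Ah m = (1 - 1 / q ^ D) * cB q \<tau> D (Suc j) m
          + (1 - q ^ Suc j) / q ^ D * XB m - (1 - q ^ Suc j) * (\<tau> + inverse \<tau> / q ^ D) * cB q \<tau> D j m"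
        unfolding Ah_def XB_def by (rule B1_coef[OF q qinj t iD])
      show ?thesis unfolding c by (simp add: algebra_simps)
    qed
  qed
  also have "\<dots> = (1 - q ^ Suc j / q ^ D) * hD q D \<tau> \<eta> (Suc j)"
    unfolding h by (rule lincomb1[symmetric])
  finally show ?thesis ..
qed

lemma B3_red:
  fixes q \<tau> M P E W Z F T :: complex
  assumes nz: "q \<noteq> 0" "\<tau> \<noteq> 0" "M \<noteq> 0" "P \<noteq> 0" "E \<noteq> 0" "F \<noteq> 0" "T \<noteq> 0"
  shows "(inverse (\<tau> * \<tau> * T) * (1 - M / E) * (1 - q * M / E) * W * (1 - 1 / (q * P)) * (1 - 1 / (q * q * P)) * Z * M / F) / M
      + (- inverse (\<tau> * \<tau> * T) * (1 - q * M / E) * W * (1 - M / (q * q * P)) * (1 - 1 / (q * P)) * (1 - 1 / (q * q * P)) * Z / F) * (1 - \<tau>\<^sup>2 * (q * M))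
    = (inverse (\<tau> * q * T * P) * W * (1 - q * q * P / E) * (1 - M / (q * q * P)) * (1 - 1 / (q * P)) * Z * M / F) * (1 + \<tau>\<^sup>2 * (q * M)\<^sup>2) / (\<tau> * (q * M))
      - (inverse (\<tau> * q * T * P) * (1 - q * M / E) * W * (1 - q * q * P / E) * (1 - 1 / (q * P)) * Z * (M / q) * (1 - M) / F) / (\<tau> * M)
      - (\<tau> + inverse \<tau> / E) * (inverse (\<tau> * q * T * P) * W * (1 - q * q * P / E) * (1 - M / (q * q * P)) * (1 - 1 / (q * P)) * Z * M / F)
      - (1 - 1 / E) * (1 - q * P) * (inverse (T * P) * W * (1 - M / (q * P)) * (1 - M / (q * q * P)) * Z * M / F)"
  using nz by (simp add: field_simps power2_eq_square)

lemma pq0_rel: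
  assumes q: "q \<noteq> 0"
  shows "pq q 0 (Suc n) m * (1 - q ^ m / q ^ Suc n) = (1 - 1 / q ^ Suc n) * pq q 0 n m"
proof -
  have "pq q 0 (Suc n) (Suc m) = pq q 0 (Suc n) m * (1 - q ^ m / q ^ Suc n)" by (simp add: pq_Suc)
  moreover have "pq q 0 (Suc n) (Suc m) = (1 - 1 / q ^ Suc n) * pq q 0 n m"
    using pq_shift[of q 0 "Suc n" m] pq_SucSuc[OF q, of 0 n m] by simp
  ultimately show ?thesis by simp
qed

lemma B3_coef_gen:
  assumes q: "q \<noteq> 0" and qinj: "\<And>a b::nat. q ^ a = q ^ b \<Longrightarrow> a = b" and t: "\<tau> \<noteq> 0"
    and iD: "Suc (m + r) < D"
  shows "cA q \<tau> D (Suc (Suc (m + r))) m / q ^ m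
        + cA q \<tau> D (Suc (Suc (m + r))) (Suc m) * (1 - 1 / q ^ Suc m) * (1 - \<tau>\<^sup>2 * q ^ Suc m)
    = cB q \<tau> D (Suc (m + r)) m * (1 + \<tau>\<^sup>2 * q ^ (2 * m + 2)) / (\<tau> * q ^ Suc m)
      - shiftB (cB q \<tau> D (Suc (m + r))) m / (\<tau> * q ^ m)
      - (\<tau> + inverse \<tau> / q ^ D) * cB q \<tau> D (Suc (m + r)) m
      - (1 - 1 / q ^ D) * (1 - q ^ Suc (m + r)) * cB q \<tau> D (m + r) m"
proof -
  define E where "E = q ^ D"
  define M where "M = q ^ m"
  define P where "P = q ^ m * q ^ r"
  define T where "T = \<tau> ^ m * \<tau> ^ r"
  define F where "F = pq q 1 0 m"
  define W where "W = pq q (m + 2) D r"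
  have E0: "E \<noteq> 0" and M0: "M \<noteq> 0" and P0: "P \<noteq> 0" and T0: "T \<noteq> 0"
    using q t by (simp_all add: E_def M_def P_def T_def)
  have F0: "F \<noteq> 0" unfolding F_def by (rule pq_nonzero[OF q qinj]) auto
  have nF: "1 - q * M \<noteq> 0"
    using qpow_ne1[OF qinj, where a = "Suc m"] by (simp add: M_def)
  have n1: "1 - M / (q * P) \<noteq> 0"
    using qpow_ne[OF qinj q, of m "Suc (m + r)"] by (simp add: P_def M_def power_add)
  have n2: "1 - M / (q * q * P) \<noteq> 0"
    using qpow_ne[OF qinj q, of m "Suc (Suc (m + r))"] by (simp add: P_def M_def power_add)
  define Z where "Z = pq q 0 (m + r) m / ((1 - M / (q * P)) * (1 - M / (q * q * P)))"
  have G1: "pq q 0 (m + r) m = (1 - M / (q * P)) * (1 - M / (q * q * P)) * Z"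
    unfolding Z_def using n1 n2 by simp
  have G2: "pq q 0 (Suc (m + r)) m = (1 - M / (q * q * P)) * (1 - 1 / (q * P)) * Z"
  proof -
    have "pq q 0 (Suc (m + r)) m * (1 - M / (q * P)) = (1 - 1 / (q * P)) * pq q 0 (m + r) m"
      using pq0_rel[OF q, of "m + r" m] by (simp add: M_def P_def power_add)
    hence "(1 - M / (q * P)) * pq q 0 (Suc (m + r)) m = (1 - M / (q * P)) * ((1 - M / (q * q * P)) * (1 - 1 / (q * P)) * Z)"
      unfolding G1 by (simp add: mult_ac)
    thus ?thesis using mult_left_cancel[OF n1] by blast
  qed
  have G3: "pq q 0 (Suc (Suc (m + r))) m = (1 - 1 / (q * P)) * (1 - 1 / (q * q * P)) * Z"
  proof -
    have "pq q 0 (Suc (Suc (m + r))) m * (1 - M / (q * q * P)) = (1 - 1 / (q * q * P)) * pq q 0 (Suc (m + r)) m"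
      using pq0_rel[OF q, of "Suc (m + r)" m] by (simp add: M_def P_def power_add)
    hence "(1 - M / (q * q * P)) * pq q 0 (Suc (Suc (m + r))) m = (1 - M / (q * q * P)) * ((1 - 1 / (q * P)) * (1 - 1 / (q * q * P)) * Z)"
      unfolding G2 by (simp add: mult_ac)
    thus ?thesis using mult_left_cancel[OF n2] by blast
  qed
  have pwT: "\<tau> ^ Suc (Suc (m + r)) = \<tau> * \<tau> * T" "(\<tau> * q) ^ Suc (m + r) = \<tau> * q * T * P"
     "(\<tau> * q) ^ (m + r) = T * P" "q ^ m = M" "q ^ Suc m = q * M"
    by (simp_all add: T_def P_def M_def power_add power_mult_distrib)
  have hA0: "cA q \<tau> D (Suc (Suc (m + r))) m = inverse (\<tau> * \<tau> * T) * (1 - M / E) * (1 - q * M / E) * W * (1 - 1 / (q * P)) * (1 - 1 / (q * q * P)) * Z * M / F"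
  proof -
    have "pq q m D (Suc (Suc (m + r)) - m) = (1 - M / E) * (1 - q * M / E) * W"
    proof -
      have "Suc (Suc (m + r)) - m = Suc (Suc r)" by simp
      thus ?thesis using pq_shift[of q m D "Suc r"] pq_shift[of q "Suc m" D r]
        by (simp add: M_def E_def W_def numeral_2_eq_2)
    qed
    thus ?thesis unfolding cA_def G3 F_def[symmetric] pwT by (simp add: mult_ac)
  qed
  have hA1: "cA q \<tau> D (Suc (Suc (m + r))) (Suc m) * (1 - 1 / q ^ Suc m) =
      - inverse (\<tau> * \<tau> * T) * (1 - q * M / E) * W * (1 - M / (q * q * P)) * (1 - 1 / (q * P)) * (1 - 1 / (q * q * P)) * Z / F"
  proof -
    have a: "pq q 0 (Suc (Suc (m + r))) (Suc m) = (1 - 1 / (q * P)) * (1 - 1 / (q * q * P)) * Z * (1 - M / (q * q * P))"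
      using G3 by (simp add: pq_Suc P_def M_def power_add)
    have b: "pq q 1 0 (Suc m) = F * (1 - q * M)" by (simp add: pq_Suc F_def M_def)
    have c: "pq q (Suc m) D (Suc (Suc (m + r)) - Suc m) = (1 - q * M / E) * W"
    proof -
      have "Suc (Suc (m + r)) - Suc m = Suc r" by simp
      thus ?thesis using pq_shift[of q "Suc m" D r] by (simp add: M_def E_def W_def numeral_2_eq_2)
    qed
    show ?thesis unfolding cA_def a b c pwT using F0 nF q M0 E0 P0 T0 t
      by (simp add: field_simps)
  qed
  have hB0: "cB q \<tau> D (Suc (m + r)) m = inverse (\<tau> * q * T * P) * W * (1 - q * q * P / E) * (1 - M / (q * q * P)) * (1 - 1 / (q * P)) * Z * M / F"
  proof -
    have "pq q (m + 2) D (Suc (m + r) - m) = W * (1 - q * q * P / E)"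
      by (simp add: Suc_diff_le pq_Suc P_def E_def W_def power_add mult_ac)
    thus ?thesis unfolding cB_def G2 F_def[symmetric] pwT by (simp add: mult_ac)
  qed
  have hBj: "cB q \<tau> D (m + r) m = inverse (T * P) * W * (1 - M / (q * P)) * (1 - M / (q * q * P)) * Z * M / F"
    unfolding cB_def G1 F_def[symmetric] pwT by (simp add: W_def mult_ac)
  have hS: "shiftB (cB q \<tau> D (Suc (m + r))) m = inverse (\<tau> * q * T * P) * (1 - q * M / E) * W * (1 - q * q * P / E) * (1 - 1 / (q * P)) * Z * (M / q) * (1 - M) / F"
  proof (cases m)
    case 0 then show ?thesis by (simp add: shiftB_def M_def)
  next
    case (Suc k)
    have a: "pq q (k + 2) D (Suc (m + r) - k) = (1 - q * M / E) * (W * (1 - q * q * P / E))"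
    proof -
      have "Suc (m + r) - k = Suc (Suc r)" using Suc by simp
      hence "pq q (k + 2) D (Suc (m + r) - k) = (1 - q ^ (k + 2) / q ^ D) * pq q (m + 2) D (Suc r)"
        using pq_shift[of q "k + 2" D "Suc r"] Suc by simp
      also have "pq q (m + 2) D (Suc r) = W * (1 - q * q * P / E)"
        by (simp add: pq_Suc P_def E_def W_def power_add mult_ac)
      finally show ?thesis using Suc by (simp add: M_def E_def)
    qed
    have b: "pq q 0 (Suc (m + r)) k = (1 - 1 / (q * P)) * Z"
    proof -
      have "pq q 0 (Suc (m + r)) m = pq q 0 (Suc (m + r)) k * (1 - M / (q * q * P))"
        unfolding Suc by (simp add: pq_Suc M_def P_def Suc power_add)
      hence "(1 - M / (q * q * P)) * pq q 0 (Suc (m + r)) k = (1 - M / (q * q * P)) * ((1 - 1 / (q * P)) * Z)"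
        unfolding G2 by (metis mult.assoc mult.commute)
      thus ?thesis using mult_left_cancel[OF n2] by blast
    qed
    have nM: "1 - M \<noteq> 0" using qpow_ne1[OF qinj, where a = m] Suc by (simp add: M_def)
    have c: "pq q 1 0 k = F / (1 - M)"
    proof -
      have "F = pq q 1 0 k * (1 - M)" unfolding F_def Suc by (simp add: pq_Suc M_def Suc)
      thus ?thesis using nM by simp
    qed
    have d: "q ^ k = M / q" using q by (simp add: M_def Suc)
    have cBk: "shiftB (cB q \<tau> D (Suc (m + r))) m = cB q \<tau> D (Suc (m + r)) k" by (simp add: shiftB_def Suc)
    show ?thesis unfolding cBk cB_def a b c d pwT using q t F0 nM E0 P0 T0 M0
      by (simp add: field_simps)
  qed
  have pw: "q ^ Suc (m + r) = q * P" "q ^ D = E" "q ^ (2 * m + 2) = (q * M)\<^sup>2"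
    by (simp_all add: P_def E_def M_def power_add power2_eq_square power_mult_distrib) (simp add: power_mult mult_ac power2_eq_square)
  show ?thesis
    unfolding hA1 unfolding hA0 hB0 hBj hS pw pwT
    by (rule B3_red[OF q t M0 P0 E0 F0 T0])
qed

lemma B3_coef:
  assumes q: "q \<noteq> 0" and qinj: "\<And>a b::nat. q ^ a = q ^ b \<Longrightarrow> a = b" and t: "\<tau> \<noteq> 0"
    and iD: "Suc j < D"
  shows "cA q \<tau> D (Suc (Suc j)) m / q ^ m
        + cA q \<tau> D (Suc (Suc j)) (Suc m) * (1 - 1 / q ^ Suc m) * (1 - \<tau>\<^sup>2 * q ^ Suc m)
    = cB q \<tau> D (Suc j) m * (1 + \<tau>\<^sup>2 * q ^ (2 * m + 2)) / (\<tau> * q ^ Suc m)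
      - shiftB (cB q \<tau> D (Suc j)) m / (\<tau> * q ^ m)
      - (\<tau> + inverse \<tau> / q ^ D) * cB q \<tau> D (Suc j) m
      - (1 - 1 / q ^ D) * (1 - q ^ Suc j) * cB q \<tau> D j m"
proof -
  consider (gen) "m \<le> j" | (top) "m = Suc j" | (top2) "m = Suc (Suc j)" | (big) "Suc (Suc j) < m" by linarith
  then show ?thesis
  proof cases
    case gen
    then obtain r where r: "j = m + r" using le_Suc_ex by blast
    have mr: "Suc (m + r) < D" using iD r by simp
    show ?thesis unfolding r by (rule B3_coef_gen[OF q qinj t mr])
  next
    case big
    have z: "cA q \<tau> D (Suc (Suc j)) m = 0" "cA q \<tau> D (Suc (Suc j)) (Suc m) = 0" "cB q \<tau> D (Suc j) m = 0"
      "cB q \<tau> D j m = 0" "shiftB (cB q \<tau> D (Suc j)) m = 0"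
      using big cA_zero[OF q] cB_zero[OF q] by (auto simp: shiftB_def split: nat.split)
    show ?thesis unfolding z by simp
  next
    case top2
    define P where "P = q ^ j"
    define T where "T = \<tau> ^ j"
    define G where "G = pq q 0 (Suc j) (Suc j)"
    define F where "F = pq q 1 0 (Suc j)"
    have P0: "P \<noteq> 0" and T0: "T \<noteq> 0" using q t by (simp_all add: P_def T_def)
    have F0: "F \<noteq> 0" unfolding F_def by (rule pq_nonzero[OF q qinj]) auto
    have n2: "1 - q * q * P \<noteq> 0"
      using qpow_ne1[of q "Suc (Suc j)", OF qinj] by (simp add: P_def mult.assoc)
    have a: "pq q 0 (Suc (Suc j)) (Suc (Suc j)) = (1 - 1 / (q * q * P)) * G"
      using pq_shift[of q 0 "Suc (Suc j)" "Suc j"] pq_SucSuc[OF q, of 0 "Suc j" "Suc j"] by (simp add: G_def P_def)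
    have b: "pq q 1 0 (Suc (Suc j)) = F * (1 - q * q * P)" by (simp add: pq_Suc F_def P_def)
    have z: "cA q \<tau> D (Suc (Suc j)) (Suc m) = 0" "cB q \<tau> D (Suc j) m = 0" "cB q \<tau> D j m = 0"
      using top2 cA_zero[OF q] cB_zero[OF q] by auto
    have sB: "shiftB (cB q \<tau> D (Suc j)) m = cB q \<tau> D (Suc j) (Suc j)" by (simp add: shiftB_def top2)
    have pw: "q ^ Suc (Suc j) = q * q * P" "\<tau> ^ Suc (Suc j) = \<tau> * \<tau> * T" "(\<tau> * q) ^ Suc j = \<tau> * q * T * P"
      "q ^ Suc j = q * P"
      by (simp_all add: P_def T_def power_mult_distrib)
    show ?thesis unfolding z sB unfolding top2 cA_def cB_def a b
      unfolding G_def[symmetric] F_def[symmetric] pw using q t P0 T0 F0 n2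
      by (simp add: field_simps)
  next
    case top
    define E where "E = q ^ D"
    define P where "P = q ^ j"
    define T where "T = \<tau> ^ j"
    define F where "F = pq q 1 0 j"
    have E0: "E \<noteq> 0" and P0: "P \<noteq> 0" and T0: "T \<noteq> 0"
      using q t by (simp_all add: E_def P_def T_def)
    have F0: "F \<noteq> 0" unfolding F_def by (rule pq_nonzero[OF q qinj]) auto
    have n1: "1 - q * P \<noteq> 0"
      using qpow_ne1[OF qinj, where a = "Suc j"] by (simp add: P_def)
    have n2: "1 - q * q * P \<noteq> 0"
      using qpow_ne1[of q "Suc (Suc j)", OF qinj] by (simp add: P_def mult.assoc)
    have nq: "1 - 1 / q \<noteq> 0"
      using qpow_ne[OF qinj q, of 0 1] by simp
    define Z where "Z = pq q 0 j j / (1 - 1 / q)"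
    have Z1: "pq q 0 j j = (1 - 1 / q) * Z" unfolding Z_def using nq by simp
    have Z2: "pq q 0 (Suc j) j = (1 - 1 / (q * P)) * Z"
    proof -
      have "pq q 0 (Suc j) j * (1 - 1 / q) = (1 - 1 / (q * P)) * pq q 0 j j"
        using pq0_rel[OF q, of j j] q by (simp add: P_def)
      hence "(1 - 1 / q) * pq q 0 (Suc j) j = (1 - 1 / q) * ((1 - 1 / (q * P)) * Z)"
        unfolding Z1 by (metis mult.assoc mult.commute)
      thus ?thesis using mult_left_cancel[OF nq] by blast
    qed
    have Z3: "pq q 0 (Suc j) (Suc j) = (1 - 1 / (q * P)) * Z * (1 - 1 / q)"
      using Z2 q by (simp add: pq_Suc P_def)
    have Z4: "pq q 0 (Suc (Suc j)) (Suc j) = (1 - 1 / (q * P)) * (1 - 1 / (q * q * P)) * Z"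
    proof -
      have "pq q 0 (Suc (Suc j)) (Suc j) * (1 - 1 / q) = (1 - 1 / (q * q * P)) * pq q 0 (Suc j) (Suc j)"
        using pq0_rel[OF q, of "Suc j" "Suc j"] q by (simp add: P_def)
      hence "(1 - 1 / q) * pq q 0 (Suc (Suc j)) (Suc j) = (1 - 1 / q) * ((1 - 1 / (q * P)) * (1 - 1 / (q * q * P)) * Z)"
        unfolding Z3 by (metis mult.assoc mult.commute)
      thus ?thesis using mult_left_cancel[OF nq] by blast
    qed
    have Z5: "pq q 0 (Suc (Suc j)) (Suc (Suc j)) = (1 - 1 / (q * P)) * (1 - 1 / (q * q * P)) * Z * (1 - 1 / q)"
      using Z4 q by (simp add: pq_Suc P_def)
    have D1: "pq q (Suc j) D 1 = 1 - q * P / E" by (simp add: pq_Suc P_def E_def)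
    have D2: "pq q (j + 2) D 1 = 1 - q * q * P / E" by (simp add: pq_Suc P_def E_def power_add)
    have Fs: "pq q 1 0 (Suc j) = F * (1 - q * P)" "pq q 1 0 (Suc (Suc j)) = F * (1 - q * P) * (1 - q * q * P)"
      by (simp_all add: pq_Suc F_def P_def)
    have z: "cB q \<tau> D j m = 0" using top cB_zero[OF q] by auto
    have sB: "shiftB (cB q \<tau> D (Suc j)) m = cB q \<tau> D (Suc j) j" by (simp add: shiftB_def top)
    have pw: "q ^ Suc (Suc j) = q * q * P" "\<tau> ^ Suc (Suc j) = \<tau> * \<tau> * T" "(\<tau> * q) ^ Suc j = \<tau> * q * T * P"
      "q ^ Suc j = q * P" "q ^ D = E" "q ^ j = P" "q ^ (2 * Suc j + 2) = (q * q * P)\<^sup>2"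
      by (simp_all add: P_def T_def E_def power_mult_distrib power2_eq_square power_add)
        (simp add: power_mult_distrib power_mult mult_ac power2_eq_square)
    have e1: "Suc (Suc j) - Suc j = 1" "Suc j - j = 1" "Suc j - Suc j = 0" "Suc (Suc j) - Suc (Suc j) = 0" by simp_all
    define F2 where "F2 = pq q 1 0 (Suc (Suc j))"
    have F20: "F2 \<noteq> 0" unfolding F2_def by (rule pq_nonzero[OF q qinj]) auto
    have iF: "inverse (pq q 1 0 (Suc (Suc j))) = 1 / F2" "inverse (pq q 1 0 (Suc j)) = (1 - q * q * P) / F2"
        "inverse (pq q 1 0 j) = (1 - q * P) * (1 - q * q * P) / F2"
    proof -
      have f2: "F2 = pq q 1 0 (Suc j) * (1 - q * q * P)" unfolding F2_def by (simp add: pq_Suc P_def mult.assoc)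
      have f1: "pq q 1 0 (Suc j) = pq q 1 0 j * (1 - q * P)" by (simp add: pq_Suc P_def)
      have f1n: "pq q 1 0 (Suc j) \<noteq> 0" by (rule pq_nonzero[OF q qinj]) auto
      show "inverse (pq q 1 0 (Suc (Suc j))) = 1 / F2" unfolding F2_def by (simp add: inverse_eq_divide)
      show "inverse (pq q 1 0 (Suc j)) = (1 - q * q * P) / F2" unfolding f2 using n2 f1n by (simp add: inverse_eq_divide)
      show "inverse (pq q 1 0 j) = (1 - q * P) * (1 - q * q * P) / F2" unfolding f2 f1 inverse_eq_divide
        using n1 n2 F0[unfolded F_def] by simp
    qed
    have dv: "\<And>a n. a / pq q 1 0 n = a * inverse (pq q 1 0 n)" by (simp add: divide_inverse)
    show ?thesis unfolding z sB unfolding top cA_def cB_def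
      unfolding e1 D1 D2 Z4 Z5 Z3 Z2 pw
      apply (simp only: dv) unfolding iF
      using q t P0 T0 F20 E0 by (simp add: field_simps power2_eq_square)
  qed
qed

lemma B3:
  assumes q: "q \<noteq> 0" and qinj: "\<And>a b::nat. q ^ a = q ^ b \<Longrightarrow> a = b" and t: "\<tau> \<noteq> 0"
    and e: "\<eta> \<noteq> 0" and D: "3 \<le> D" and iD: "Suc j < D"
  shows "hD q D \<tau> \<eta> (Suc (Suc j)) =
     ((\<eta> + inverse \<eta>) - (\<tau> + inverse \<tau> / q ^ D)) * hperp q D \<tau> \<eta> (int (Suc j))
     - (1 - 1 / q ^ D) * (1 - q ^ Suc j) * hperp q D \<tau> \<eta> (int j)"
proof -
  define u where "u = uu q (\<tau> * q) \<eta>"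
  define Ah where "Ah m = cA q \<tau> D (Suc (Suc j)) m / q ^ m
        + cA q \<tau> D (Suc (Suc j)) (Suc m) * (1 - 1 / q ^ Suc m) * (1 - \<tau>\<^sup>2 * q ^ Suc m)" for m
  define XB where "XB m = cB q \<tau> D (Suc j) m * (1 + \<tau>\<^sup>2 * q ^ (2 * m + 2)) / (\<tau> * q ^ Suc m)
          - shiftB (cB q \<tau> D (Suc j)) m / (\<tau> * q ^ m)" for m
  have h: "hD q D \<tau> \<eta> (Suc (Suc j)) = (\<Sum>m\<le>D. Ah m * u m)"
  proof -
    have "hD q D \<tau> \<eta> (Suc (Suc j)) = (\<Sum>n\<le>D. cA q \<tau> D (Suc (Suc j)) n * uu q \<tau> \<eta> n)"
      by (rule hD_expand[OF q qinj]) (use iD in auto)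
    also have "\<dots> = (\<Sum>m\<le>D. Ah m * u m)" unfolding Ah_def u_def
      by (rule conv_sum[OF e q]) (rule cA_zero[OF q], use iD in simp)
    finally show ?thesis .
  qed
  have H1: "hperp q D \<tau> \<eta> (int (Suc j)) = (\<Sum>m\<le>D. cB q \<tau> D (Suc j) m * u m)"
    unfolding u_def by (rule hperp_expand[OF q qinj D t e]) (use iD in auto)
  have H0: "hperp q D \<tau> \<eta> (int j) = (\<Sum>m\<le>D. cB q \<tau> D j m * u m)"
    unfolding u_def by (rule hperp_expand[OF q qinj D t e]) (use iD in auto)
  have XH1: "(\<eta> + inverse \<eta>) * hperp q D \<tau> \<eta> (int (Suc j)) = (\<Sum>m\<le>D. XB m * u m)"
    unfolding H1 XB_def u_def by (rule xmul_sum[OF e q t]) (rule cB_zero[OF q], use iD in simp)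
  have "((\<eta> + inverse \<eta>) - (\<tau> + inverse \<tau> / q ^ D)) * hperp q D \<tau> \<eta> (int (Suc j))
     - (1 - 1 / q ^ D) * (1 - q ^ Suc j) * hperp q D \<tau> \<eta> (int j)
     = 1 * ((\<eta> + inverse \<eta>) * hperp q D \<tau> \<eta> (int (Suc j)))
       + (- (\<tau> + inverse \<tau> / q ^ D)) * hperp q D \<tau> \<eta> (int (Suc j))
       + (- ((1 - 1 / q ^ D) * (1 - q ^ Suc j))) * hperp q D \<tau> \<eta> (int j)"
    by (simp add: algebra_simps)
  also have "\<dots> = (\<Sum>m\<le>D. (1 * XB m + (- (\<tau> + inverse \<tau> / q ^ D)) * cB q \<tau> D (Suc j) m
       + (- ((1 - 1 / q ^ D) * (1 - q ^ Suc j))) * cB q \<tau> D j m) * u m)"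
    unfolding XH1 unfolding H1 H0 by (rule lincomb3)
  also have "\<dots> = (\<Sum>m\<le>D. Ah m * u m)"
  proof (rule sum.cong[OF refl])
    fix m
    have c: "Ah m = XB m - (\<tau> + inverse \<tau> / q ^ D) * cB q \<tau> D (Suc j) m
          - (1 - 1 / q ^ D) * (1 - q ^ Suc j) * cB q \<tau> D j m"
      unfolding Ah_def XB_def by (rule B3_coef[OF q qinj t iD])
    show "(1 * XB m + (- (\<tau> + inverse \<tau> / q ^ D)) * cB q \<tau> D (Suc j) m
       + (- ((1 - 1 / q ^ D) * (1 - q ^ Suc j))) * cB q \<tau> D j m) * u m = Ah m * u m"
      unfolding c by (simp add: algebra_simps)
  qed
  finally show ?thesis unfolding h ..
qed

lemma hperp0:
  assumes D: "3 \<le> D"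
  shows "hperp q D \<tau> \<eta> 0 = 1"
  using D by (simp add: hperp_def hpoly_def phi32_term_def)

lemma hD0: "hD q D \<tau> \<eta> 0 = 1"
  by (simp add: hD_def hpoly_def phi32_term_def)

lemma B3_0:
  assumes q: "q \<noteq> 0" and qinj: "\<And>a b::nat. q ^ a = q ^ b \<Longrightarrow> a = b" and t: "\<tau> \<noteq> 0"
    and e: "\<eta> \<noteq> 0" and D: "3 \<le> D"
  shows "hD q D \<tau> \<eta> 1 = ((\<eta> + inverse \<eta>) - (\<tau> + inverse \<tau> / q ^ D)) * hperp q D \<tau> \<eta> 0"
proof -
  have n1: "1 - inverse (q ^ D) \<noteq> 0"
    using qpow_ne[OF qinj q, of 0 D] D by (simp add: inverse_eq_divide)
  have nq: "1 - q \<noteq> 0" using qpow_ne1[of q 1, OF qinj] by simp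
  define K where "K = (1 - \<tau> / \<eta>) * (1 - \<tau> * \<eta>)"
  have a: "(1 - inverse q) * q / (1 - q) = -1" using nq q by (simp add: field_simps)
  have p: "phi32_term 1 (\<tau> / \<eta>) (\<tau> * \<eta>) 0 (inverse (q ^ D)) q q = 1 + K / (1 - inverse (q ^ D)) * ((1 - inverse q) * q / (1 - q))"
    unfolding phi32_term_def K_def by (simp add: qpoch_def field_simps)
  have "hD q D \<tau> \<eta> 1 = (1 - inverse (q ^ D)) / \<tau> * (1 - K / (1 - inverse (q ^ D)))"
    unfolding hD_def hpoly_def p a by (simp add: qpoch_def)
  also have "\<dots> = ((1 - inverse (q ^ D)) * (1 - K / (1 - inverse (q ^ D)))) / \<tau>" by simp
  also have "(1 - inverse (q ^ D)) * (1 - K / (1 - inverse (q ^ D))) = (1 - inverse (q ^ D)) - K"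
    using n1 by (simp add: right_diff_distrib)
  also have "((1 - inverse (q ^ D)) - K) / \<tau> = ((\<eta> + inverse \<eta>) - (\<tau> + inverse \<tau> / q ^ D)) * hperp q D \<tau> \<eta> 0"
    unfolding hperp0[OF D] K_def using q t e by (simp add: field_simps power2_eq_square)
  finally show ?thesis .
qed



definition ppf :: "complex \<Rightarrow> complex \<Rightarrow> complex \<Rightarrow> complex" where
  "ppf E \<tau> \<eta> = inverse \<eta> * (\<eta> - \<tau>) * (\<eta> - inverse \<tau> * inverse E)"

definition B1rel where
  "B1rel E \<tau> \<eta> Q h H Hm \<longleftrightarrow> (1 - Q / E) * h = (1 - 1 / E) * H + (1 - Q) * ((\<eta> + inverse \<eta>) / E - (\<tau> + inverse \<tau> / E)) * Hm"

definition B3rel where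
  "B3rel E \<tau> \<eta> Q h1 H Hm \<longleftrightarrow> h1 = ((\<eta> + inverse \<eta>) - (\<tau> + inverse \<tau> / E)) * H - (1 - 1 / E) * (1 - Q) * Hm"

lemma core1:
  fixes q \<tau> \<eta> E Q :: complex
  assumes nz: "q \<noteq> 0" "\<tau> \<noteq> 0" "\<eta> \<noteq> 0" "E \<noteq> 0"
    and r1: "B1rel E \<tau> \<eta> Q hi H0 Hm1" and r3: "B3rel E \<tau> \<eta> Q hi1 H0 Hm1"
  shows "\<eta> * ((E - Q) * hi - (1 - Q) * ppf E \<tau> \<eta> * Hm1) =
      (\<tau> * E + inverse \<tau>) * (Q / E - 1) * (- (hi - ppf E \<tau> \<eta> * Hm1) * (1 - Q))
    + (\<tau> * E + inverse \<tau>) * (Q / E) * ((E - Q) * hi - (1 - Q) * ppf E \<tau> \<eta> * Hm1)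
    + \<tau> * (E - q * Q + 1) * (- (hi1 - ppf E \<tau> \<eta> * H0) / \<tau>)
    + \<tau> * (((E - q * Q) * hi1 - (1 - q * Q) * ppf E \<tau> \<eta> * H0) / \<tau>)"
proof -
  have e3: "hi1 = ((\<eta> + inverse \<eta>) - (\<tau> + inverse \<tau> / E)) * H0 - (1 - 1 / E) * (1 - Q) * Hm1"
    using r3 unfolding B3rel_def .
  show ?thesis using nz r1 unfolding e3 B1rel_def ppf_def
    apply (simp add: field_simps)
    by algebra
qed

lemma core2:
  fixes q \<tau> \<eta> E Q :: complex
  assumes nz: "q \<noteq> 0" "\<tau> \<noteq> 0" "\<eta> \<noteq> 0" "E \<noteq> 0"
    and r1: "B1rel E \<tau> \<eta> Q hi H0 Hm1" and r3: "B3rel E \<tau> \<eta> Q hi1 H0 Hm1"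
    and r1m: "B1rel E \<tau> \<eta> (Q / q) hm1 Hm1 Hm2" and r3m: "B3rel E \<tau> \<eta> (Q / q) hi Hm1 Hm2"
  shows "inverse \<eta> * ((E - Q) * hi - (1 - Q) * ppf E \<tau> \<eta> * Hm1) =
      inverse \<tau> * (1 - Q / E) * (\<tau> * (1 - Q) * ((E - Q / q) * hm1 - (1 - Q / q) * ppf E \<tau> \<eta> * Hm2))
    + (\<tau> * E + inverse \<tau>) * (1 - Q / E) * (- (hi - ppf E \<tau> \<eta> * Hm1) * (1 - Q))
    - \<tau> * (E - Q + 1) * (- (hi1 - ppf E \<tau> \<eta> * H0) / \<tau>)"
proof -
  have e3: "hi1 = ((\<eta> + inverse \<eta>) - (\<tau> + inverse \<tau> / E)) * H0 - (1 - 1 / E) * (1 - Q) * Hm1"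
    using r3 unfolding B3rel_def .
  have e3m: "hi = ((\<eta> + inverse \<eta>) - (\<tau> + inverse \<tau> / E)) * Hm1 - (1 - 1 / E) * (1 - Q / q) * Hm2"
    using r3m unfolding B3rel_def .
  show ?thesis using nz r1 r1m unfolding e3 unfolding e3m B1rel_def ppf_def
    apply (simp add: field_simps)
    by algebra
qed

lemma core3:
  fixes q \<tau> \<eta> E Q :: complex
  assumes nz: "q \<noteq> 0" "\<tau> \<noteq> 0" "\<eta> \<noteq> 0" "E \<noteq> 0"
    and r1: "B1rel E \<tau> \<eta> Q hi H0 Hm1" and r3: "B3rel E \<tau> \<eta> Q hi1 H0 Hm1"
  shows "\<eta> * (- (hi1 - ppf E \<tau> \<eta> * H0) / \<tau>) =
      inverse \<tau> * (1 - Q / E) * (- (hi - ppf E \<tau> \<eta> * Hm1) * (1 - Q))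
    - inverse \<tau> * (Q / E) * ((E - Q) * hi - (1 - Q) * ppf E \<tau> \<eta> * Hm1)"
proof -
  have e3: "hi1 = ((\<eta> + inverse \<eta>) - (\<tau> + inverse \<tau> / E)) * H0 - (1 - 1 / E) * (1 - Q) * Hm1"
    using r3 unfolding B3rel_def .
  show ?thesis using nz r1 unfolding e3 B1rel_def ppf_def
    apply (simp add: field_simps)
    by algebra
qed

lemma core4:
  fixes q \<tau> \<eta> E Q :: complex
  assumes nz: "q \<noteq> 0" "\<tau> \<noteq> 0" "\<eta> \<noteq> 0" "E \<noteq> 0"
    and r1: "B1rel E \<tau> \<eta> Q hi H0 Hm1" and r3: "B3rel E \<tau> \<eta> Q hi1 H0 Hm1"
    and r1p: "B1rel E \<tau> \<eta> (q * Q) hi1 Hp1 H0" and r3p: "B3rel E \<tau> \<eta> (q * Q) hi2 Hp1 H0"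
  shows "inverse \<eta> * (- (hi1 - ppf E \<tau> \<eta> * H0) / \<tau>) =
      inverse \<tau> * (q * Q / E) * ((E - Q) * hi - (1 - Q) * ppf E \<tau> \<eta> * Hm1)
    + (\<tau> * E + inverse \<tau>) * (q * Q / E) * (- (hi1 - ppf E \<tau> \<eta> * H0) / \<tau>)
    + \<tau> * (- (hi2 - ppf E \<tau> \<eta> * Hp1) / \<tau>\<^sup>2)"
proof -
  have e3: "hi1 = ((\<eta> + inverse \<eta>) - (\<tau> + inverse \<tau> / E)) * H0 - (1 - 1 / E) * (1 - Q) * Hm1"
    using r3 unfolding B3rel_def .
  have e3p: "hi2 = ((\<eta> + inverse \<eta>) - (\<tau> + inverse \<tau> / E)) * Hp1 - (1 - 1 / E) * (1 - q * Q) * H0"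
    using r3p unfolding B3rel_def .
  show ?thesis using nz r1 r1p unfolding e3p unfolding e3 B1rel_def ppf_def
    apply (simp add: field_simps power2_eq_square)
    by algebra
qed

lemma core4top:
  fixes q \<tau> \<eta> E Q :: complex
  assumes nz: "q \<noteq> 0" "\<tau> \<noteq> 0" "\<eta> \<noteq> 0" "E \<noteq> 0" and top: "E = q * Q"
    and r1: "B1rel E \<tau> \<eta> Q hi H0 Hm1" and r3: "B3rel E \<tau> \<eta> Q hi1 H0 Hm1"
  shows "inverse \<eta> * (- (hi1 - ppf E \<tau> \<eta> * H0) / \<tau>) =
      inverse \<tau> * (q * Q / E) * ((E - Q) * hi - (1 - Q) * ppf E \<tau> \<eta> * Hm1)
    + (\<tau> * E + inverse \<tau>) * (q * Q / E) * (- (hi1 - ppf E \<tau> \<eta> * H0) / \<tau>)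
    + \<tau> * (- (E - 1) * inverse \<eta> * ppf E \<tau> \<eta> * H0 / \<tau>\<^sup>2)"
proof -
  have e3: "hi1 = ((\<eta> + inverse \<eta>) - (\<tau> + inverse \<tau> / E)) * H0 - (1 - 1 / E) * (1 - Q) * Hm1"
    using r3 unfolding B3rel_def .
  show ?thesis using nz r1 unfolding e3 B1rel_def ppf_def top
    apply (simp add: field_simps power2_eq_square)
    by algebra
qed

definition Nf :: "complex \<Rightarrow> nat \<Rightarrow> complex \<Rightarrow> nat \<Rightarrow> complex" where
  "Nf q D \<tau> i = \<tau> ^ i * (q ^ D - 1) * qpoch q q i"

lemma pperp_ppf: "pperp q D \<tau> \<eta> = ppf (q ^ D) \<tau> \<eta>"
  by (simp add: pperp_def ppf_def)

lemma Nf_Suc: "Nf q D \<tau> (Suc i) = Nf q D \<tau> i * \<tau> * (1 - q ^ Suc i)"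
  by (simp add: Nf_def qpoch_Suc mult_ac)

lemma ellm_N:
  assumes q: "q \<noteq> 0" and qinj: "\<And>a b::nat. q ^ a = q ^ b \<Longrightarrow> a = b" and t: "\<tau> \<noteq> 0"
    and iD: "i < D"
  shows "Nf q D \<tau> i * ellm q D \<tau> \<eta> (int i) =
     (q ^ D - q ^ i) * hD q D \<tau> \<eta> i - (1 - q ^ i) * ppf (q ^ D) \<tau> \<eta> * hperp q D \<tau> \<eta> (int i - 1)"
proof -
  have n1: "q ^ D - q ^ i \<noteq> 0" using qinj iD by (metis less_irrefl right_minus_eq)
  have n2: "q ^ D - 1 \<noteq> 0" using qinj iD by (metis less_nat_zero_code power_0 right_minus_eq)
  have n3: "qpoch q q i \<noteq> 0" unfolding qpoch_q_pq by (rule pq_nonzero[OF q qinj]) auto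
  have e: "ellm q D \<tau> \<eta> (int i) = (q ^ D - q ^ i) / (\<tau> ^ i * (q ^ D - 1) * qpoch q q i) *
        (hD q D \<tau> \<eta> i - (1 - q ^ i) / (q ^ D - q ^ i) * pperp q D \<tau> \<eta> * hperp q D \<tau> \<eta> (int i - 1))"
    unfolding ellm_def using iD by auto
  have nN: "Nf q D \<tau> i \<noteq> 0" unfolding Nf_def using n2 n3 t by simp
  have e2: "ellm q D \<tau> \<eta> (int i) = (q ^ D - q ^ i) / Nf q D \<tau> i *
        (hD q D \<tau> \<eta> i - (1 - q ^ i) / (q ^ D - q ^ i) * ppf (q ^ D) \<tau> \<eta> * hperp q D \<tau> \<eta> (int i - 1))"
    unfolding e Nf_def pperp_ppf ..
  have "Nf q D \<tau> i * ellm q D \<tau> \<eta> (int i) = (q ^ D - q ^ i) *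
        (hD q D \<tau> \<eta> i - (1 - q ^ i) / (q ^ D - q ^ i) * ppf (q ^ D) \<tau> \<eta> * hperp q D \<tau> \<eta> (int i - 1))"
    unfolding e2 using nN by simp
  also have "\<dots> = (q ^ D - q ^ i) * hD q D \<tau> \<eta> i - (1 - q ^ i) * ppf (q ^ D) \<tau> \<eta> * hperp q D \<tau> \<eta> (int i - 1)"
    using n1 by (simp add: right_diff_distrib)
  finally show ?thesis .
qed

lemma ellp_N:
  assumes q: "q \<noteq> 0" and qinj: "\<And>a b::nat. q ^ a = q ^ b \<Longrightarrow> a = b" and t: "\<tau> \<noteq> 0"
    and iD: "i < D"
  shows "Nf q D \<tau> i * ellp q D \<tau> \<eta> (int i) =
     - (hD q D \<tau> \<eta> (i + 1) - ppf (q ^ D) \<tau> \<eta> * hperp q D \<tau> \<eta> (int i)) / \<tau>"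
proof -
  have n2: "q ^ D - 1 \<noteq> 0" using qinj iD by (metis less_nat_zero_code power_0 right_minus_eq)
  have n2': "1 - q ^ D \<noteq> 0" using n2 by (metis right_minus_eq)
  have n3: "qpoch q q i \<noteq> 0" unfolding qpoch_q_pq by (rule pq_nonzero[OF q qinj]) auto
  have e: "ellp q D \<tau> \<eta> (int i) = (hD q D \<tau> \<eta> (i + 1) - pperp q D \<tau> \<eta> * hperp q D \<tau> \<eta> (int i))
          / (\<tau> ^ (i + 1) * (1 - q ^ D) * qpoch q q i)"
    unfolding ellp_def using iD by auto
  show ?thesis unfolding e Nf_def pperp_ppf using n2 n2' n3 t
    by (simp add: field_simps)
qed

lemma ellm_N_top:
  assumes q: "q \<noteq> 0" and qinj: "\<And>a b::nat. q ^ a = q ^ b \<Longrightarrow> a = b" and t: "\<tau> \<noteq> 0"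
    and D: "3 \<le> D"
  shows "Nf q D \<tau> D * ellm q D \<tau> \<eta> (int D) =
     (q ^ D - q ^ D) * hD q D \<tau> \<eta> D - (1 - q ^ D) * ppf (q ^ D) \<tau> \<eta> * hperp q D \<tau> \<eta> (int D - 1)"
proof -
  have n3: "qpoch q q D \<noteq> 0" unfolding qpoch_q_pq by (rule pq_nonzero[OF q qinj]) auto
  have e: "ellm q D \<tau> \<eta> (int D) = pperp q D \<tau> \<eta> * hperp q D \<tau> \<eta> (int D - 1) / (\<tau> ^ D * qpoch q q D)"
    unfolding ellm_def using D by auto
  show ?thesis unfolding e Nf_def pperp_ppf using n3 t
    by (simp add: field_simps)
qed

lemma ellp_N_top:
  assumes q: "q \<noteq> 0" and qinj: "\<And>a b::nat. q ^ a = q ^ b \<Longrightarrow> a = b" and t: "\<tau> \<noteq> 0"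
    and D: "3 \<le> D" and e0: "\<eta> \<noteq> 0"
  shows "Nf q D \<tau> D * ellp q D \<tau> \<eta> (int D) =
     - (q ^ D - 1) * inverse \<eta> * ppf (q ^ D) \<tau> \<eta> * hperp q D \<tau> \<eta> (int D - 1) / \<tau>"
proof -
  have n3: "qpoch q q D \<noteq> 0" unfolding qpoch_q_pq by (rule pq_nonzero[OF q qinj]) auto
  have e: "ellp q D \<tau> \<eta> (int D) = - (inverse \<eta> * pperp q D \<tau> \<eta> * hperp q D \<tau> \<eta> (int D - 1)) / (\<tau> ^ (D + 1) * qpoch q q D)"
    unfolding ellp_def using D by auto
  show ?thesis unfolding e Nf_def pperp_ppf using n3 t e0
    by (simp add: field_simps)
qed

lemma ell_m1:
  shows "ellm q D \<tau> \<eta> (-1) = 0" "ellp q D \<tau> \<eta> (-1) = 0" "hperp q D \<tau> \<eta> (-1) = 0"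
  by (simp_all add: ellm_def ellp_def hperp_def)

lemma B1rel_all:
  assumes q: "q \<noteq> 0" and qinj: "\<And>a b::nat. q ^ a = q ^ b \<Longrightarrow> a = b" and t: "\<tau> \<noteq> 0"
    and e: "\<eta> \<noteq> 0" and D: "3 \<le> D" and iD: "i < D"
  shows "B1rel (q ^ D) \<tau> \<eta> (q ^ i) (hD q D \<tau> \<eta> i) (hperp q D \<tau> \<eta> (int i)) (hperp q D \<tau> \<eta> (int i - 1))"
proof (cases i)
  case 0
  then show ?thesis unfolding B1rel_def using hD0 hperp0[OF D] ell_m1 by simp
next
  case (Suc j)
  have "int i - 1 = int j" using Suc by simp
  then show ?thesis unfolding B1rel_def Suc using B1[OF q qinj t e D, of j] iD Suc by simp
qed

lemma B3rel_all:
  assumes q: "q \<noteq> 0" and qinj: "\<And>a b::nat. q ^ a = q ^ b \<Longrightarrow> a = b" and t: "\<tau> \<noteq> 0"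
    and e: "\<eta> \<noteq> 0" and D: "3 \<le> D" and iD: "i < D"
  shows "B3rel (q ^ D) \<tau> \<eta> (q ^ i) (hD q D \<tau> \<eta> (i + 1)) (hperp q D \<tau> \<eta> (int i)) (hperp q D \<tau> \<eta> (int i - 1))"
proof (cases i)
  case 0
  then show ?thesis unfolding B3rel_def using B3_0[OF q qinj t e D] ell_m1 by simp
next
  case (Suc j)
  have "int i - 1 = int j" using Suc by simp
  then show ?thesis unfolding B3rel_def Suc using B3[OF q qinj t e D, of j] iD Suc by simp
qed

lemma core2z:
  fixes \<tau> \<eta> E :: complex
  assumes nz: "\<tau> \<noteq> 0" "\<eta> \<noteq> 0" "E \<noteq> 0"
    and r1: "B1rel E \<tau> \<eta> 1 hi H0 Hm1" and r3: "B3rel E \<tau> \<eta> 1 hi1 H0 Hm1"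
  shows "inverse \<eta> * ((E - 1) * hi - (1 - 1) * ppf E \<tau> \<eta> * Hm1) =
      inverse \<tau> * (1 - 1 / E) * 0
    + (\<tau> * E + inverse \<tau>) * (1 - 1 / E) * (- (hi - ppf E \<tau> \<eta> * Hm1) * (1 - 1))
    - \<tau> * (E - 1 + 1) * (- (hi1 - ppf E \<tau> \<eta> * H0) / \<tau>)"
proof -
  have e3: "hi1 = ((\<eta> + inverse \<eta>) - (\<tau> + inverse \<tau> / E)) * H0 - (1 - 1 / E) * (1 - 1) * Hm1"
    using r3 unfolding B3rel_def .
  show ?thesis using nz r1 unfolding e3 B1rel_def ppf_def
    apply (simp add: field_simps)
    by algebra
qed

lemma powi_facts:
  fixes q :: complex
  assumes "q \<noteq> 0"
  shows "q powi (int i - int D) = q ^ i / q ^ D" "q powi (int i - int D + 1) = q * q ^ i / q ^ D"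
  using assms by (simp_all add: power_int_diff power_int_add)

lemma main:
  fixes q \<tau> \<eta> :: complex
  assumes q: "q \<noteq> 0" and qinj: "\<And>a b::nat. q ^ a = q ^ b \<Longrightarrow> a = b" and t: "\<tau> \<noteq> 0"
    and e: "\<eta> \<noteq> 0" and D: "3 \<le> D" and iD: "i < D"
  shows
   "\<eta> * ellm q D \<tau> \<eta> (int i) =
      (\<tau> * q ^ D + inverse \<tau>) * (q powi (int i - int D) - 1) * ellp q D \<tau> \<eta> (int i - 1)
      + (\<tau> * q ^ D + inverse \<tau>) * q powi (int i - int D) * ellm q D \<tau> \<eta> (int i)
      + \<tau> * (q ^ D - q ^ (i + 1) + 1) * ellp q D \<tau> \<eta> (int i)
      + \<tau> * (1 - q ^ (i + 1)) * ellm q D \<tau> \<eta> (int i + 1) \<and>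
    inverse \<eta> * ellm q D \<tau> \<eta> (int i) =
      inverse \<tau> * (1 - q powi (int i - int D)) * ellm q D \<tau> \<eta> (int i - 1)
      + (\<tau> * q ^ D + inverse \<tau>) * (1 - q powi (int i - int D)) * ellp q D \<tau> \<eta> (int i - 1)
      - \<tau> * (q ^ D - q ^ i + 1) * ellp q D \<tau> \<eta> (int i) \<and>
    \<eta> * ellp q D \<tau> \<eta> (int i) =
      inverse \<tau> * (1 - q powi (int i - int D)) * ellp q D \<tau> \<eta> (int i - 1)
      - inverse \<tau> * q powi (int i - int D) * ellm q D \<tau> \<eta> (int i) \<and>
    inverse \<eta> * ellp q D \<tau> \<eta> (int i) =
      inverse \<tau> * q powi (int i - int D + 1) * ellm q D \<tau> \<eta> (int i)
      + (\<tau> * q ^ D + inverse \<tau>) * q powi (int i - int D + 1) * ellp q D \<tau> \<eta> (int i)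
      + \<tau> * (1 - q ^ (i + 1)) * ellp q D \<tau> \<eta> (int i + 1)"
proof -
  define E where "E = q ^ D"
  define Q where "Q = q ^ i"
  define pp where "pp = ppf E \<tau> \<eta>"
  define N where "N = Nf q D \<tau> i"
  define mi where "mi = ellm q D \<tau> \<eta> (int i)"
  define pi where "pi = ellp q D \<tau> \<eta> (int i)"
  define mm where "mm = ellm q D \<tau> \<eta> (int i - 1)"
  define pm where "pm = ellp q D \<tau> \<eta> (int i - 1)"
  define m1 where "m1 = ellm q D \<tau> \<eta> (int i + 1)"
  define p1 where "p1 = ellp q D \<tau> \<eta> (int i + 1)"
  have E0: "E \<noteq> 0" unfolding E_def using q by simp
  have n3: "qpoch q q i \<noteq> 0" unfolding qpoch_q_pq by (rule pq_nonzero[OF q qinj]) auto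
  have n2: "q ^ D - 1 \<noteq> 0" using qinj iD by (metis less_nat_zero_code power_0 right_minus_eq)
  have N0: "N \<noteq> 0" unfolding N_def Nf_def using t n2 n3 by simp
  have pw: "q powi (int i - int D) = Q / E" "q powi (int i - int D + 1) = q * Q / E" "q ^ (i + 1) = q * Q"
    "q ^ D = E" "q ^ i = Q"
    using powi_facts[OF q] by (simp_all add: Q_def E_def)
  have lm0: "N * mi = (E - Q) * hD q D \<tau> \<eta> i - (1 - Q) * pp * hperp q D \<tau> \<eta> (int i - 1)"
    using ellm_N[OF q qinj t iD, of \<eta>] unfolding N_def mi_def E_def Q_def pp_def by simp
  have lp0: "N * pi = - (hD q D \<tau> \<eta> (i + 1) - pp * hperp q D \<tau> \<eta> (int i)) / \<tau>"
    using ellp_N[OF q qinj t iD, of \<eta>] unfolding N_def pi_def E_def pp_def by simp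
  have lpm: "N * pm = - (hD q D \<tau> \<eta> i - pp * hperp q D \<tau> \<eta> (int i - 1)) * (1 - Q)"
  proof (cases i)
    case 0 then show ?thesis by (simp add: pm_def Q_def ell_m1)
  next
    case (Suc j)
    have ij: "int i - 1 = int j" using Suc by simp
    have "N * pm = \<tau> * (1 - Q) * (Nf q D \<tau> j * ellp q D \<tau> \<eta> (int j))"
      unfolding N_def pm_def Suc Nf_Suc ij Q_def by (simp add: mult_ac)
    also have "\<dots> = - (hD q D \<tau> \<eta> i - pp * hperp q D \<tau> \<eta> (int i - 1)) * (1 - Q)"
    proof -
      have jD: "j < D" using iD Suc by simp
      have X: "Nf q D \<tau> j * ellp q D \<tau> \<eta> (int j) = - (hD q D \<tau> \<eta> (j + 1) - ppf (q ^ D) \<tau> \<eta> * hperp q D \<tau> \<eta> (int j)) / \<tau>"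
        by (rule ellp_N[OF q qinj t jD])
      have ji: "j + 1 = i" using Suc by simp
      show ?thesis unfolding X ij ji pp_def E_def using t by (simp add: field_simps)
    qed
    finally show ?thesis .
  qed
  have lm1: "N * (1 - q * Q) * m1 = ((E - q * Q) * hD q D \<tau> \<eta> (i + 1) - (1 - q * Q) * pp * hperp q D \<tau> \<eta> (int i)) / \<tau>"
  proof -
    have a: "N * (1 - q * Q) * m1 = (Nf q D \<tau> (Suc i) * ellm q D \<tau> \<eta> (int (Suc i))) / \<tau>"
      unfolding N_def m1_def Nf_Suc Q_def using t by (simp add: field_simps)
    have b: "int (Suc i) - 1 = int i" by simp
    show ?thesis
    proof (cases "Suc i < D")
      case True
      have X: "Nf q D \<tau> (Suc i) * ellm q D \<tau> \<eta> (int (Suc i)) = (q ^ D - q ^ Suc i) * hD q D \<tau> \<eta> (Suc i)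
          - (1 - q ^ Suc i) * ppf (q ^ D) \<tau> \<eta> * hperp q D \<tau> \<eta> (int (Suc i) - 1)"
        by (rule ellm_N[OF q qinj t True])
      show ?thesis unfolding a X b by (simp add: E_def Q_def pp_def)
    next
      case False
      hence Di: "D = Suc i" using iD by simp
      have c: "q * Q = E" unfolding E_def Q_def Di by simp
      have X: "Nf q D \<tau> D * ellm q D \<tau> \<eta> (int D) = (q ^ D - q ^ D) * hD q D \<tau> \<eta> D
          - (1 - q ^ D) * ppf (q ^ D) \<tau> \<eta> * hperp q D \<tau> \<eta> (int D - 1)"
        by (rule ellm_N_top[OF q qinj t D])
      have b2: "int D - 1 = int i" using Di by simp
      show ?thesis unfolding a unfolding Di[symmetric] X b2 c by (simp add: E_def pp_def)
    qed
  qed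
  have r1: "B1rel E \<tau> \<eta> Q (hD q D \<tau> \<eta> i) (hperp q D \<tau> \<eta> (int i)) (hperp q D \<tau> \<eta> (int i - 1))"
    unfolding E_def Q_def by (rule B1rel_all[OF q qinj t e D iD])
  have r3: "B3rel E \<tau> \<eta> Q (hD q D \<tau> \<eta> (i + 1)) (hperp q D \<tau> \<eta> (int i)) (hperp q D \<tau> \<eta> (int i - 1))"
    unfolding E_def Q_def by (rule B3rel_all[OF q qinj t e D iD])
  have K: "\<tau> * q ^ D + inverse \<tau> = \<tau> * E + inverse \<tau>" unfolding E_def ..
  have id1: "\<eta> * mi = (\<tau> * E + inverse \<tau>) * (Q / E - 1) * pm + (\<tau> * E + inverse \<tau>) * (Q / E) * mi
      + \<tau> * (E - q * Q + 1) * pi + \<tau> * (1 - q * Q) * m1"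
  proof -
    have "N * (\<eta> * mi) = \<eta> * (N * mi)" by (simp only: mult_ac)
    also have "\<dots> = (\<tau> * E + inverse \<tau>) * (Q / E - 1) * (N * pm) + (\<tau> * E + inverse \<tau>) * (Q / E) * (N * mi)
      + \<tau> * (E - q * Q + 1) * (N * pi) + \<tau> * (N * (1 - q * Q) * m1)"
      unfolding lm0 lpm lp0 lm1 pp_def by (rule core1[OF q t e E0 r1 r3])
    also have "\<dots> = N * ((\<tau> * E + inverse \<tau>) * (Q / E - 1) * pm + (\<tau> * E + inverse \<tau>) * (Q / E) * mi
      + \<tau> * (E - q * Q + 1) * pi + \<tau> * (1 - q * Q) * m1)"
      by (simp add: algebra_simps)
    finally show ?thesis using N0 by simp
  qed
  have id3: "\<eta> * pi = inverse \<tau> * (1 - Q / E) * pm - inverse \<tau> * (Q / E) * mi"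
  proof -
    have "N * (\<eta> * pi) = \<eta> * (N * pi)" by (simp only: mult_ac)
    also have "\<dots> = inverse \<tau> * (1 - Q / E) * (N * pm) - inverse \<tau> * (Q / E) * (N * mi)"
      unfolding lm0 lpm lp0 pp_def by (rule core3[OF q t e E0 r1 r3])
    also have "\<dots> = N * (inverse \<tau> * (1 - Q / E) * pm - inverse \<tau> * (Q / E) * mi)"
      by (simp add: algebra_simps)
    finally show ?thesis using N0 by simp
  qed
  have id2: "inverse \<eta> * mi = inverse \<tau> * (1 - Q / E) * mm + (\<tau> * E + inverse \<tau>) * (1 - Q / E) * pm
      - \<tau> * (E - Q + 1) * pi"
  proof (cases i)
    case 0
    have Q1: "Q = 1" unfolding Q_def 0 by simp
    have mm0: "mm = 0" unfolding mm_def 0 by (simp add: ell_m1)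
    have "N * (inverse \<eta> * mi) = inverse \<eta> * (N * mi)" by (simp only: mult_ac)
    also have "\<dots> = inverse \<tau> * (1 - 1 / E) * 0 + (\<tau> * E + inverse \<tau>) * (1 - 1 / E) * (N * pm)
      - \<tau> * (E - 1 + 1) * (N * pi)"
      unfolding lm0 lpm lp0 pp_def Q1 by (rule core2z[OF t e E0 r1[unfolded Q1] r3[unfolded Q1]])
    also have "\<dots> = N * (inverse \<tau> * (1 - Q / E) * mm + (\<tau> * E + inverse \<tau>) * (1 - Q / E) * pm
      - \<tau> * (E - Q + 1) * pi)"
      unfolding mm0 Q1 by (simp add: algebra_simps)
    finally show ?thesis using N0 by simp
  next
    case (Suc j)
    have jD: "j < D" using iD Suc by simp
    have ij: "int i - 1 = int j" using Suc by simp
    have ji: "j + 1 = i" using Suc by simp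
    have Qj: "q ^ j = Q / q" unfolding Q_def Suc using q by simp
    have X: "Nf q D \<tau> j * ellm q D \<tau> \<eta> (int j) = (q ^ D - q ^ j) * hD q D \<tau> \<eta> j
        - (1 - q ^ j) * ppf (q ^ D) \<tau> \<eta> * hperp q D \<tau> \<eta> (int j - 1)"
      by (rule ellm_N[OF q qinj t jD])
    have lmm: "N * mm = \<tau> * (1 - Q) * ((E - Q / q) * hD q D \<tau> \<eta> j - (1 - Q / q) * pp * hperp q D \<tau> \<eta> (int j - 1))"
    proof -
      have "N * mm = \<tau> * (1 - Q) * (Nf q D \<tau> j * ellm q D \<tau> \<eta> (int j))"
        unfolding N_def mm_def Suc Nf_Suc Q_def by (simp add: mult_ac)
      also have "\<dots> = \<tau> * (1 - Q) * ((E - Q / q) * hD q D \<tau> \<eta> j - (1 - Q / q) * pp * hperp q D \<tau> \<eta> (int j - 1))"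
        unfolding X Qj E_def pp_def ..
      finally show ?thesis .
    qed
    have r1m: "B1rel E \<tau> \<eta> (Q / q) (hD q D \<tau> \<eta> j) (hperp q D \<tau> \<eta> (int j)) (hperp q D \<tau> \<eta> (int j - 1))"
      using B1rel_all[OF q qinj t e D jD] unfolding E_def Qj .
    have r3m: "B3rel E \<tau> \<eta> (Q / q) (hD q D \<tau> \<eta> i) (hperp q D \<tau> \<eta> (int j)) (hperp q D \<tau> \<eta> (int j - 1))"
      using B3rel_all[OF q qinj t e D jD] unfolding E_def Qj ji .
    have "N * (inverse \<eta> * mi) = inverse \<eta> * (N * mi)" by (simp only: mult_ac)
    also have "\<dots> = inverse \<tau> * (1 - Q / E) * (N * mm) + (\<tau> * E + inverse \<tau>) * (1 - Q / E) * (N * pm)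
      - \<tau> * (E - Q + 1) * (N * pi)"
      unfolding lm0 lpm lp0 lmm pp_def unfolding ij
      by (rule core2[OF q t e E0 r1[unfolded ij] r3[unfolded ij] r1m r3m])
    also have "\<dots> = N * (inverse \<tau> * (1 - Q / E) * mm + (\<tau> * E + inverse \<tau>) * (1 - Q / E) * pm
      - \<tau> * (E - Q + 1) * pi)"
      by (simp add: algebra_simps)
    finally show ?thesis using N0 by simp
  qed
  have id4: "inverse \<eta> * pi = inverse \<tau> * (q * Q / E) * mi + (\<tau> * E + inverse \<tau>) * (q * Q / E) * pi
      + \<tau> * (1 - q * Q) * p1"
  proof -
    have a: "N * (1 - q * Q) * p1 = (Nf q D \<tau> (Suc i) * ellp q D \<tau> \<eta> (int (Suc i))) / \<tau>"
      unfolding N_def p1_def Nf_Suc Q_def using t by (simp add: field_simps)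
    have b: "int (Suc i) = 1 + int i" by simp
    have conv: "N * (inverse \<eta> * pi) = inverse \<eta> * (N * pi)" by (simp only: mult_ac)
    have bk: "inverse \<tau> * (q * Q / E) * (N * mi) + (\<tau> * E + inverse \<tau>) * (q * Q / E) * (N * pi)
        + \<tau> * (N * (1 - q * Q) * p1) = N * (inverse \<tau> * (q * Q / E) * mi + (\<tau> * E + inverse \<tau>) * (q * Q / E) * pi
      + \<tau> * (1 - q * Q) * p1)"
      by (simp add: algebra_simps)
    show ?thesis
    proof (cases "Suc i < D")
      case True
      have X: "Nf q D \<tau> (Suc i) * ellp q D \<tau> \<eta> (int (Suc i)) =
          - (hD q D \<tau> \<eta> (Suc i + 1) - ppf (q ^ D) \<tau> \<eta> * hperp q D \<tau> \<eta> (int (Suc i))) / \<tau>"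
        by (rule ellp_N[OF q qinj t True])
      have lp1: "N * (1 - q * Q) * p1 = - (hD q D \<tau> \<eta> (Suc (Suc i)) - pp * hperp q D \<tau> \<eta> (1 + int i)) / \<tau>\<^sup>2"
        unfolding a X unfolding b pp_def E_def using t by (simp add: field_simps power2_eq_square)
      have qQ: "q ^ Suc i = q * Q" unfolding Q_def by simp
      have r1p: "B1rel E \<tau> \<eta> (q * Q) (hD q D \<tau> \<eta> (i + 1)) (hperp q D \<tau> \<eta> (1 + int i)) (hperp q D \<tau> \<eta> (int i))"
        using B1rel_all[OF q qinj t e D True] unfolding E_def qQ by simp
      have r3p: "B3rel E \<tau> \<eta> (q * Q) (hD q D \<tau> \<eta> (Suc (Suc i))) (hperp q D \<tau> \<eta> (1 + int i)) (hperp q D \<tau> \<eta> (int i))"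
        using B3rel_all[OF q qinj t e D True] unfolding E_def qQ by simp
      have "N * (inverse \<eta> * pi) = inverse \<tau> * (q * Q / E) * (N * mi) + (\<tau> * E + inverse \<tau>) * (q * Q / E) * (N * pi)
        + \<tau> * (N * (1 - q * Q) * p1)"
        unfolding conv lm0 lp0 lp1 pp_def
        by (rule core4[OF q t e E0 r1 r3 r1p r3p])
      thus ?thesis unfolding bk using N0 by simp
    next
      case False
      hence Di: "D = Suc i" using iD by simp
      have c: "q * Q = E" unfolding E_def Q_def Di by simp
      have X: "Nf q D \<tau> D * ellp q D \<tau> \<eta> (int D) =
          - (q ^ D - 1) * inverse \<eta> * ppf (q ^ D) \<tau> \<eta> * hperp q D \<tau> \<eta> (int D - 1) / \<tau>"
        by (rule ellp_N_top[OF q qinj t D e])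
      have b2: "int D - 1 = int i" using Di by simp
      have lp1: "N * (1 - q * Q) * p1 = - (E - 1) * inverse \<eta> * pp * hperp q D \<tau> \<eta> (int i) / \<tau>\<^sup>2"
        unfolding a unfolding Di[symmetric] X b2 pp_def E_def using t by (simp add: field_simps power2_eq_square)
      have "N * (inverse \<eta> * pi) = inverse \<tau> * (q * Q / E) * (N * mi) + (\<tau> * E + inverse \<tau>) * (q * Q / E) * (N * pi)
        + \<tau> * (N * (1 - q * Q) * p1)"
        unfolding conv lm0 lp0 lp1 pp_def
        by (rule core4top[OF q t e E0 c[symmetric] r1 r3])
      thus ?thesis unfolding bk using N0 by simp
    qed
  qed
  show ?thesis unfolding pw K
    unfolding mi_def[symmetric] pi_def[symmetric] mm_def[symmetric] pm_def[symmetric] m1_def[symmetric] p1_def[symmetric]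
    using id1 id2 id3 id4 by blast
qed

theorem theorem9p5:
  fixes p k D :: nat and e :: real and q \<tau> \<eta> :: complex and i :: nat
  assumes "prime p" and "k \<ge> 1"
    and "D \<ge> 3"
    and "e \<in> {0, 1/2, 1, 3/2, 2}"
    and "e \<in> {1/2, 3/2} \<longrightarrow> (\<exists>m::nat. p ^ k = m ^ 2)"
    and "q = of_nat (p ^ k)"
    and "\<tau> = \<i> * complex_of_real (real (p ^ k) powr (- (real D + e) / 2))"
    and "\<eta> \<noteq> 0"
    and "i \<le> D - 1"
  shows
   "\<eta> * ellm q D \<tau> \<eta> (int i) =
      (\<tau> * q ^ D + inverse \<tau>) * (q powi (int i - int D) - 1) * ellp q D \<tau> \<eta> (int i - 1)
      + (\<tau> * q ^ D + inverse \<tau>) * q powi (int i - int D) * ellm q D \<tau> \<eta> (int i)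
      + \<tau> * (q ^ D - q ^ (i + 1) + 1) * ellp q D \<tau> \<eta> (int i)
      + \<tau> * (1 - q ^ (i + 1)) * ellm q D \<tau> \<eta> (int i + 1) \<and>
    inverse \<eta> * ellm q D \<tau> \<eta> (int i) =
      inverse \<tau> * (1 - q powi (int i - int D)) * ellm q D \<tau> \<eta> (int i - 1)
      + (\<tau> * q ^ D + inverse \<tau>) * (1 - q powi (int i - int D)) * ellp q D \<tau> \<eta> (int i - 1)
      - \<tau> * (q ^ D - q ^ i + 1) * ellp q D \<tau> \<eta> (int i) \<and>
    \<eta> * ellp q D \<tau> \<eta> (int i) =
      inverse \<tau> * (1 - q powi (int i - int D)) * ellp q D \<tau> \<eta> (int i - 1)
      - inverse \<tau> * q powi (int i - int D) * ellm q D \<tau> \<eta> (int i) \<and>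
    inverse \<eta> * ellp q D \<tau> \<eta> (int i) =
      inverse \<tau> * q powi (int i - int D + 1) * ellm q D \<tau> \<eta> (int i)
      + (\<tau> * q ^ D + inverse \<tau>) * q powi (int i - int D + 1) * ellp q D \<tau> \<eta> (int i)
      + \<tau> * (1 - q ^ (i + 1)) * ellp q D \<tau> \<eta> (int i + 1)"
proof -
  have p2: "2 \<le> p" using assms(1) by (rule prime_ge_2_nat)
  have pk: "2 \<le> p ^ k"
  proof -
    have "p ^ 1 \<le> p ^ k" using assms(2) p2 by (intro power_increasing) auto
    thus ?thesis using p2 by simp
  qed
  have q0: "q \<noteq> 0" using assms(6) p2 by simp
  have qinj: "\<And>a b::nat. q ^ a = q ^ b \<Longrightarrow> a = b"
  proof -
    fix a b :: nat assume h: "q ^ a = q ^ b"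
    hence "of_nat ((p ^ k) ^ a) = (of_nat ((p ^ k) ^ b) :: complex)" using assms(6) by simp
    hence "(p ^ k) ^ a = (p ^ k) ^ b" by (simp only: of_nat_eq_iff)
    moreover have "1 < p ^ k" using pk by simp
    ultimately show "a = b" using power_inject_exp by blast
  qed
  have t0: "\<tau> \<noteq> 0"
  proof -
    have "real (p ^ k) > 0" using p2 by simp
    hence "real (p ^ k) powr (- (real D + e) / 2) > 0" by simp
    thus ?thesis using assms(7) by simp
  qed
  have iD: "i < D" using assms(3) assms(9) by simp
  show ?thesis by (rule main[OF q0 qinj t0 assms(8) assms(3) iD])
qed

end
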